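(* Let $A$ and $B$ be finite-dimensional $C^*$-algebras. There exist a finite-dimensional Hilbert space $H$ and a channel $M:A\otimes B(H)\to B$ which is entanglement-invertible with respect to the canonical maximally entangled state $\Phi_H$ of $H\otimes H$ if and only if $\dim A=\dim B$.
   Context: A channel is a completely positive trace-preserving linear map between finite-dimensional $C^*$-algebras (acting on states). For an orthonormal basis $\{|h\rangle\}$ of $H$, $|\eta_H\rangle=\sum_h|h\rangle\otimes|h\rangle$ and $\Phi_H=|\eta_H\rangle\langle\eta_H|/\dim H$. Let $W$ be a state on $H_1\otimes H_2$ and $W'$ the same state with tensor factors swapped. A channel $M:A\otimes B(H_1)\to B$ is entanglement-invertible with respect to $W$ if there is a channel $N:B\otimes B(H_2)\to A$ with $N\big((M\otimes\mathrm{id}_{B(H_2)})(\rho\otimes W)\big)=\rho$ for all $\rho\in A$ and $M\big((N\otimes\mathrm{id}_{B(H_1)})(\sigma\otimes W')\big)=\sigma$ for all $\sigma\in B$. Here $H_1=H_2=H$, $W=\Phi_H$. $\dim$ denotes dimension as a complex vector space. *)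

theory Defs
  imports "Jordan_Normal_Form.Matrix"
begin

(* A finite-dimensional C*-algebra is (up to *-isomorphism) a direct sum of full matrix
   algebras M_{n_1} + ... + M_{n_r}.  We represent it concretely by the list ns = [n_1,...,n_r]
   of block sizes: the algebra is the set of block-diagonal complex matrices of size
   sum ns with diagonal blocks of sizes n_1,...,n_r. *)

definition blk_off :: "nat list \<Rightarrow> nat \<Rightarrow> nat" where
  "blk_off ns i = sum_list (take i ns)"

definition same_block :: "nat list \<Rightarrow> nat \<Rightarrow> nat \<Rightarrow> bool" where
  "same_block ns r c \<longleftrightarrow> (\<exists>i<length ns. blk_off ns i \<le> r \<and> r < blk_off ns i + ns ! i
                                      \<and> blk_off ns i \<le> c \<and> c < blk_off ns i + ns ! i)"

definition fdalg :: "nat list \<Rightarrow> complex mat set" where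
  "fdalg ns = {X \<in> carrier_mat (sum_list ns) (sum_list ns).
      \<forall>r < sum_list ns. \<forall>c < sum_list ns. \<not> same_block ns r c \<longrightarrow> X $$ (r, c) = 0}"

(* A \<otimes> B(C^k): the block sizes are multiplied by k *)
definition ampl :: "nat list \<Rightarrow> nat \<Rightarrow> nat list" where
  "ampl ns k = map (\<lambda>n. n * k) ns"

definition kron :: "complex mat \<Rightarrow> complex mat \<Rightarrow> complex mat" where
  "kron A B = mat (dim_row A * dim_row B) (dim_col A * dim_col B)
     (\<lambda>(i, j). A $$ (i div dim_row B, j div dim_col B) * B $$ (i mod dim_row B, j mod dim_col B))"

(* T \<otimes> id_{M_k}, for T mapping n\<times>n matrices to m\<times>m matrices *)
definition tensor_id :: "(complex mat \<Rightarrow> complex mat) \<Rightarrow> nat \<Rightarrow> nat \<Rightarrow> nat \<Rightarrow> complex mat \<Rightarrow> complex mat" where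
  "tensor_id T n m k Z = mat (m * k) (m * k)
     (\<lambda>(r, c). T (mat n n (\<lambda>(i, j). Z $$ (i * k + r mod k, j * k + c mod k))) $$ (r div k, c div k))"

definition mtrace :: "complex mat \<Rightarrow> complex" where
  "mtrace X = (\<Sum>i < dim_row X. X $$ (i, i))"

definition psd :: "nat \<Rightarrow> complex mat \<Rightarrow> bool" where
  "psd n X \<longleftrightarrow> X \<in> carrier_mat n n \<and>
     (\<forall>v :: nat \<Rightarrow> complex. Im (\<Sum>i<n. \<Sum>j<n. cnj (v i) * X $$ (i, j) * v j) = 0 \<and>
                             0 \<le> Re (\<Sum>i<n. \<Sum>j<n. cnj (v i) * X $$ (i, j) * v j))"

definition channel :: "nat list \<Rightarrow> nat list \<Rightarrow> (complex mat \<Rightarrow> complex mat) \<Rightarrow> bool" where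
  "channel ns ms T \<longleftrightarrow>
     (\<forall>X \<in> fdalg ns. T X \<in> fdalg ms) \<and>
     (\<forall>X \<in> fdalg ns. \<forall>Y \<in> fdalg ns. \<forall>a b :: complex.
         T (a \<cdot>\<^sub>m X + b \<cdot>\<^sub>m Y) = a \<cdot>\<^sub>m T X + b \<cdot>\<^sub>m T Y) \<and>
     (\<forall>X \<in> fdalg ns. mtrace (T X) = mtrace X) \<and>
     (\<forall>k > 0. \<forall>Z \<in> fdalg (ampl ns k). psd (sum_list ns * k) Z \<longrightarrow>
         psd (sum_list ms * k) (tensor_id T (sum_list ns) (sum_list ms) k Z))"

(* \<eta>_H = \<Sum>_h |h> \<otimes> |h> on C^d \<otimes> C^d, index (h1,h2) \<mapsto> h1*d + h2 *)
definition eta :: "nat \<Rightarrow> nat \<Rightarrow> complex" where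
  "eta d r = (if r div d = r mod d then 1 else 0)"

definition maxent :: "nat \<Rightarrow> complex mat" where
  "maxent d = mat (d * d) (d * d) (\<lambda>(r, c). complex_of_real (1 / real d) * eta d r * cnj (eta d c))"

definition swap_state :: "nat \<Rightarrow> nat \<Rightarrow> complex mat \<Rightarrow> complex mat" where
  "swap_state d1 d2 W = mat (d2 * d1) (d2 * d1)
     (\<lambda>(r, c). W $$ ((r mod d1) * d2 + r div d1, (c mod d1) * d2 + c div d1))"

definition ent_invertible ::
  "nat list \<Rightarrow> nat list \<Rightarrow> nat \<Rightarrow> complex mat \<Rightarrow> (complex mat \<Rightarrow> complex mat) \<Rightarrow> bool" where
  "ent_invertible ns ms d W M \<longleftrightarrow>
     channel (ampl ns d) ms M \<and>
     (\<exists>N. channel (ampl ms d) ns N \<and>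
        (\<forall>\<rho> \<in> fdalg ns. N (tensor_id M (sum_list ns * d) (sum_list ms) d (kron \<rho> W)) = \<rho>) \<and>
        (\<forall>\<sigma> \<in> fdalg ms. M (tensor_id N (sum_list ms * d) (sum_list ns) d (kron \<sigma> (swap_state d d W))) = \<sigma>))"

definition lin_comb :: "nat \<Rightarrow> (nat \<Rightarrow> complex) \<Rightarrow> complex mat list \<Rightarrow> complex mat" where
  "lin_comb n cs bs = mat n n (\<lambda>(i, j). \<Sum>k < length bs. cs k * bs ! k $$ (i, j))"

definition is_basis :: "nat list \<Rightarrow> complex mat list \<Rightarrow> bool" where
  "is_basis ns bs \<longleftrightarrow> set bs \<subseteq> fdalg ns \<and>
     (\<forall>X \<in> fdalg ns. \<exists>cs. X = lin_comb (sum_list ns) cs bs) \<and>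
     (\<forall>cs. lin_comb (sum_list ns) cs bs = 0\<^sub>m (sum_list ns) (sum_list ns) \<longrightarrow> (\<forall>k < length bs. cs k = 0))"

definition alg_dim :: "nat list \<Rightarrow> nat" where
  "alg_dim ns = (THE n. \<exists>bs. is_basis ns bs \<and> length bs = n)"

end

theory Submission
  imports Defs "HOL-Library.Function_Algebras" "HOL-Library.Product_Lexorder"
begin


lemma sum_split_mult:
  fixes F :: "nat \<Rightarrow> 'a::comm_monoid_add"
  shows "(\<Sum>w<X*d. F w) = (\<Sum>u<X. \<Sum>h<d. F (u*d+h))"
proof -
  have b: "bij_betw (\<lambda>(u,h). u*d+h) ({..<X} \<times> {..<d}) {..<X*d}"
  proof (rule bij_betw_byWitness[where f'="\<lambda>w. (w div d, w mod d)"])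
    show "\<forall>a\<in>{..<X} \<times> {..<d}. (\<lambda>w. (w div d, w mod d)) ((\<lambda>(u, h). u * d + h) a) = a"
      by auto
    show "\<forall>a'\<in>{..<X * d}. (case (a' div d, a' mod d) of (u, h) \<Rightarrow> u * d + h) = a'"
      by auto
    show "(\<lambda>(u, h). u * d + h) ` ({..<X} \<times> {..<d}) \<subseteq> {..<X * d}"
    proof clarsimp
      fix u h assume "u < X" "h < d"
      then have "u*d + h < u*d + d" by simp
      also have "\<dots> = (Suc u) * d" by simp
      also have "\<dots> \<le> X * d" using \<open>u<X\<close> by (intro mult_right_mono) auto
      finally show "u*d+h < X*d" .
    qed
    show "(\<lambda>w. (w div d, w mod d)) ` {..<X * d} \<subseteq> {..<X} \<times> {..<d}"
      by (auto simp: less_mult_imp_div_less)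
         (metis mod_less_divisor mult_zero_right not_gr_zero not_less_zero)
  qed
  have "(\<Sum>w<X*d. F w) = (\<Sum>p\<in>{..<X} \<times> {..<d}. F ((\<lambda>(u,h). u*d+h) p))"
    using sum.reindex_bij_betw[OF b, of F] by simp
  also have "\<dots> = (\<Sum>u<X. \<Sum>h<d. F (u*d+h))"
    by (simp add: sum.cartesian_product split_beta)
  finally show ?thesis .
qed

lemma blk_off_Suc: "i < length ns \<Longrightarrow> blk_off ns (Suc i) = blk_off ns i + ns ! i"
  unfolding blk_off_def by (simp add: take_Suc_conv_app_nth)

lemma blk_off_mono: "i \<le> i' \<Longrightarrow> blk_off ns i \<le> blk_off ns i'"
proof -
  assume "i \<le> i'"
  then obtain k where "i' = i + k" using le_Suc_ex by blast
  then show ?thesis unfolding blk_off_def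
    by (simp add: take_add)
qed

lemma blk_off_len: "blk_off ns (length ns) = sum_list ns"
  unfolding blk_off_def by simp

lemma blk_end_le: "i < length ns \<Longrightarrow> blk_off ns i + ns ! i \<le> sum_list ns"
  by (metis blk_off_Suc blk_off_len blk_off_mono Suc_leI)

lemma blk_sep: "i < i' \<Longrightarrow> i < length ns \<Longrightarrow> blk_off ns i + ns ! i \<le> blk_off ns i'"
  by (metis blk_off_Suc blk_off_mono Suc_leI)

lemma blk_uniq:
  assumes "i < length ns" "i' < length ns"
    "blk_off ns i \<le> r" "r < blk_off ns i + ns ! i"
    "blk_off ns i' \<le> r" "r < blk_off ns i' + ns ! i'"
  shows "i = i'"
proof (rule ccontr)
  assume "i \<noteq> i'"
  then consider "i < i'" | "i' < i" by linarith
  then show False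
  proof cases
    case 1 then show ?thesis using blk_sep[OF 1 assms(1)] assms by linarith
  next
    case 2 then show ?thesis using blk_sep[OF 2 assms(2)] assms by linarith
  qed
qed

lemma blk_ex: "r < sum_list ns \<Longrightarrow> \<exists>i<length ns. blk_off ns i \<le> r \<and> r < blk_off ns i + ns ! i"
proof (induction ns arbitrary: r)
  case Nil then show ?case by simp
next
  case (Cons a ns)
  show ?case
  proof (cases "r < a")
    case True
    then show ?thesis by (intro exI[of _ 0]) (auto simp: blk_off_def)
  next
    case False
    then have "r - a < sum_list ns" using Cons.prems by simp
    from Cons.IH[OF this] obtain i where "i < length ns" "blk_off ns i \<le> r - a" "r - a < blk_off ns i + ns ! i"
      by blast
    then show ?thesis using False
      by (intro exI[of _ "Suc i"]) (auto simp: blk_off_def)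
  qed
qed

definition inb :: "nat list \<Rightarrow> nat \<Rightarrow> nat \<Rightarrow> bool" where
  "inb ns i r \<longleftrightarrow> i < length ns \<and> blk_off ns i \<le> r \<and> r < blk_off ns i + ns ! i"

definition blk :: "nat list \<Rightarrow> nat \<Rightarrow> nat" where
  "blk ns r = (THE i. inb ns i r)"

lemma inb_blk: "r < sum_list ns \<Longrightarrow> inb ns (blk ns r) r"
  unfolding blk_def
  by (rule theI') (use blk_ex[of r ns] blk_uniq[of _ ns _ r] in \<open>auto simp: inb_def\<close>)

lemma inb_uniq: "inb ns i r \<Longrightarrow> inb ns i' r \<Longrightarrow> i = i'"
  unfolding inb_def using blk_uniq by blast

lemma inb_blk_eq: "inb ns i r \<Longrightarrow> blk ns r = i"
  by (metis inb_blk inb_uniq inb_def blk_end_le less_le_trans)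

lemma inb_lt: "inb ns i r \<Longrightarrow> r < sum_list ns"
  unfolding inb_def using blk_end_le by (meson less_le_trans)

lemma same_block_inb: "same_block ns r c \<longleftrightarrow> (\<exists>i. inb ns i r \<and> inb ns i c)"
  unfolding same_block_def inb_def by blast

lemma sum_ampl: "sum_list (ampl ns k) = sum_list ns * k"
  unfolding ampl_def by (induction ns) (auto simp: algebra_simps)

lemma length_ampl[simp]: "length (ampl ns k) = length ns"
  unfolding ampl_def by simp

lemma nth_ampl: "i < length ns \<Longrightarrow> ampl ns k ! i = ns ! i * k"
  unfolding ampl_def by simp

lemma blk_off_ampl: "blk_off (ampl ns k) i = blk_off ns i * k"
  unfolding blk_off_def ampl_def
  by (metis ampl_def sum_ampl take_map)

lemma inb_ampl: "0 < k \<Longrightarrow> inb (ampl ns k) i w \<longleftrightarrow> inb ns i (w div k)"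
  unfolding inb_def blk_off_ampl
  by (auto simp: nth_ampl less_eq_div_iff_mult_less_eq div_less_iff_less_mult algebra_simps)

lemma same_block_ampl: "0 < k \<Longrightarrow> same_block (ampl ns k) w w' \<longleftrightarrow> same_block ns (w div k) (w' div k)"
  unfolding same_block_inb using inb_ampl by blast


definition munit :: "nat \<Rightarrow> nat \<Rightarrow> nat \<Rightarrow> complex mat" where
  "munit n r c = mat n n (\<lambda>(i,j). if i = r \<and> j = c then 1 else 0)"

definition sidx :: "nat list \<Rightarrow> (nat \<times> nat) set" where
  "sidx ns = {(r,c). r < sum_list ns \<and> c < sum_list ns \<and> same_block ns r c}"

definition lin_on :: "nat list \<Rightarrow> (complex mat \<Rightarrow> complex mat) \<Rightarrow> bool" where
  "lin_on ns T \<longleftrightarrow> (\<forall>X \<in> fdalg ns. \<forall>Y \<in> fdalg ns. \<forall>a b :: complex.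
         T (a \<cdot>\<^sub>m X + b \<cdot>\<^sub>m Y) = a \<cdot>\<^sub>m T X + b \<cdot>\<^sub>m T Y)"

lemma finite_sidx: "finite (sidx ns)"
  by (rule finite_subset[of _ "{..<sum_list ns} \<times> {..<sum_list ns}"]) (auto simp: sidx_def)

lemma munit_fdalg: "(r,c) \<in> sidx ns \<Longrightarrow> munit (sum_list ns) r c \<in> fdalg ns"
  unfolding fdalg_def munit_def sidx_def by auto

lemma fdalg_carrier: "X \<in> fdalg ns \<Longrightarrow> X \<in> carrier_mat (sum_list ns) (sum_list ns)"
  unfolding fdalg_def by auto

lemma fdalg_zero: "X \<in> fdalg ns \<Longrightarrow> r < sum_list ns \<Longrightarrow> c < sum_list ns \<Longrightarrow> \<not> same_block ns r c \<Longrightarrow> X $$ (r,c) = 0"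
  unfolding fdalg_def by auto

lemma lincomb_entry:
  assumes "A \<in> carrier_mat m m" "B \<in> carrier_mat m m" "i < m" "j < m"
  shows "(a \<cdot>\<^sub>m A + b \<cdot>\<^sub>m B) $$ (i,j) = a * A $$ (i,j) + b * B $$ (i,j)"
  using assms by auto

lemma lin_zero:
  assumes lin: "lin_on ns T" and into: "\<forall>X\<in>fdalg ns. T X \<in> carrier_mat m m"
    and "a < m" "b < m"
  shows "T (0\<^sub>m (sum_list ns) (sum_list ns)) $$ (a,b) = 0"
proof -
  let ?Z = "0\<^sub>m (sum_list ns) (sum_list ns) :: complex mat"
  have Z: "?Z \<in> fdalg ns" unfolding fdalg_def by auto
  have "?Z = 0 \<cdot>\<^sub>m ?Z + 0 \<cdot>\<^sub>m ?Z" by (rule eq_matI) auto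
  then have "T ?Z = 0 \<cdot>\<^sub>m T ?Z + 0 \<cdot>\<^sub>m T ?Z" using lin Z unfolding lin_on_def by metis
  then show ?thesis using into Z assms lincomb_entry[of "T ?Z" m "T ?Z" a b 0 0] by simp
qed

lemma lin_scale:
  assumes lin: "lin_on ns T" and "X \<in> fdalg ns"
  shows "T (a \<cdot>\<^sub>m X) = a \<cdot>\<^sub>m T X + 0 \<cdot>\<^sub>m T X"
proof -
  have "a \<cdot>\<^sub>m X = a \<cdot>\<^sub>m X + 0 \<cdot>\<^sub>m X" by (rule eq_matI) auto
  then show ?thesis using lin assms unfolding lin_on_def by metis
qed

lemma lin_scale_entry:
  assumes lin: "lin_on ns T" and "X \<in> fdalg ns" and into: "\<forall>X\<in>fdalg ns. T X \<in> carrier_mat m m"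
    and "i < m" "j < m"
  shows "T (a \<cdot>\<^sub>m X) $$ (i,j) = a * T X $$ (i,j)"
  using lin_scale[OF lin assms(2), of a] into assms lincomb_entry[of "T X" m "T X" i j a 0] by simp

lemma expand:
  assumes lin: "lin_on ns T" and into: "\<forall>X\<in>fdalg ns. T X \<in> carrier_mat m m"
    and Y: "Y \<in> fdalg ns" and ab: "a < m" "b < m"
  shows "T Y $$ (a,b) = (\<Sum>w\<in>sidx ns. Y $$ w * T (munit (sum_list ns) (fst w) (snd w)) $$ (a,b))"
proof -
  let ?N = "sum_list ns"
  define restr where "restr F = mat ?N ?N (\<lambda>(i,j). if (i,j) \<in> F then Y $$ (i,j) else 0)" for F
  have rin: "restr F \<in> fdalg ns" if "F \<subseteq> sidx ns" for F
    using that unfolding fdalg_def restr_def sidx_def by auto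
  have main: "F \<subseteq> sidx ns \<Longrightarrow> T (restr F) $$ (a,b) = (\<Sum>w\<in>F. Y $$ w * T (munit ?N (fst w) (snd w)) $$ (a,b))"
    if "finite F" for F
    using that
  proof (induction F rule: finite_induct)
    case empty
    have "restr {} = 0\<^sub>m ?N ?N" unfolding restr_def by (rule eq_matI) auto
    then show ?case using lin_zero[OF lin into ab] by simp
  next
    case (insert w F)
    obtain r c where w: "w = (r,c)" by fastforce
    have F: "F \<subseteq> sidx ns" and wS: "w \<in> sidx ns" using insert by auto
    have eq: "restr (insert w F) = 1 \<cdot>\<^sub>m restr F + (Y $$ w) \<cdot>\<^sub>m munit ?N r c"
      unfolding restr_def munit_def using insert.hyps(2) w by (intro eq_matI) auto
    have mu: "munit ?N r c \<in> fdalg ns" using munit_fdalg wS w by simp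
    have "T (restr (insert w F)) = 1 \<cdot>\<^sub>m T (restr F) + (Y $$ w) \<cdot>\<^sub>m T (munit ?N r c)"
      unfolding eq using lin rin[OF F] mu unfolding lin_on_def by blast
    then have "T (restr (insert w F)) $$ (a,b) = T (restr F) $$ (a,b) + Y $$ w * T (munit ?N r c) $$ (a,b)"
      using into rin[OF F] mu ab lincomb_entry[of "T (restr F)" m "T (munit ?N r c)" a b 1 "Y $$ w"] by simp
    then show ?case using insert F w by simp
  qed
  have "restr (sidx ns) = Y"
    using Y unfolding restr_def fdalg_def sidx_def by (intro eq_matI) auto
  then show ?thesis using main[OF finite_sidx[of ns]] by simp
qed


lemma divmod_pair:
  fixes x y q :: nat
  assumes "y < q"
  shows "(x*q + y) div q = x" "(x*q + y) mod q = y"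
  using assms by auto

lemma kron_idx:
  fixes i s d :: nat
  assumes "s < d"
  shows "(i*d+s) div (d*d) = i div d" "(i*d+s) mod (d*d) = (i mod d)*d + s"
proof -
  have e: "i*d+s = (i div d)*(d*d) + ((i mod d)*d + s)"
    by (metis add.commute add.left_commute div_mult_mod_eq mult.assoc distrib_right)
  have lt: "(i mod d)*d + s < d*d"
  proof -
    have "(i mod d)*d + s < (i mod d)*d + d" using assms by simp
    also have "\<dots> = Suc (i mod d) * d" by simp
    also have "\<dots> \<le> d * d" using assms by (intro mult_right_mono) (auto intro: Suc_leI)
    finally show ?thesis .
  qed
  show "(i*d+s) div (d*d) = i div d" by (subst e, rule divmod_pair(1)[OF lt])
  show "(i*d+s) mod (d*d) = (i mod d)*d + s" by (subst e, rule divmod_pair(2)[OF lt])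
qed

lemma eta_idx: "s < d \<Longrightarrow> eta d (a*d + s) = (if a = s then 1 else 0)"
  unfolding eta_def by simp

lemma kron_maxent_entry:
  assumes X: "X \<in> carrier_mat n n" and "i < n*d" "j < n*d" "s < d" "t < d"
  shows "kron X (maxent d) $$ (i*d+s, j*d+t) =
     X $$ (i div d, j div d) * (if i mod d = s \<and> j mod d = t then 1 / of_nat d else 0)"
proof -
  have d: "0 < d" using assms by auto
  have ii: "i*d+s < n*(d*d)"
  proof -
    have "i*d+s < i*d+d" using assms by simp
    also have "\<dots> = Suc i * d" by simp
    also have "\<dots> \<le> n*d*d" using assms by (intro mult_right_mono) auto
    finally show ?thesis by (simp add: mult.assoc)
  qed
  have jj: "j*d+t < n*(d*d)"
  proof -
    have "j*d+t < j*d+d" using assms by simp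
    also have "\<dots> = Suc j * d" by simp
    also have "\<dots> \<le> n*d*d" using assms by (intro mult_right_mono) auto
    finally show ?thesis by (simp add: mult.assoc)
  qed
  have m1: "(i mod d)*d + s < d*d" "(j mod d)*d + t < d*d"
    using kron_idx(2)[OF \<open>s<d\<close>, of i] kron_idx(2)[OF \<open>t<d\<close>, of j] d
    by (metis mod_less_divisor mult_pos_pos)+
  have "kron X (maxent d) $$ (i*d+s, j*d+t) =
     X $$ (i div d, j div d) * maxent d $$ ((i mod d)*d + s, (j mod d)*d + t)"
    unfolding kron_def using X ii jj by (simp add: maxent_def kron_idx[OF \<open>s<d\<close>] kron_idx[OF \<open>t<d\<close>])
  also have "maxent d $$ ((i mod d)*d + s, (j mod d)*d + t) = (if i mod d = s \<and> j mod d = t then 1 / of_nat d else 0)"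
    unfolding maxent_def using m1 \<open>s<d\<close> \<open>t<d\<close> by (simp add: eta_idx)
  finally show ?thesis .
qed

lemma tensor_id_entry:
  assumes "w < m*k" "w' < m*k"
  shows "tensor_id T n m k Z $$ (w,w') =
     T (mat n n (\<lambda>(i, j). Z $$ (i * k + w mod k, j * k + w' mod k))) $$ (w div k, w' div k)"
  unfolding tensor_id_def using assms by simp

lemma munit_sidx_ampl:
  assumes "(r,c) \<in> sidx ns" "s < d" "t < d"
  shows "(r*d+s, c*d+t) \<in> sidx (ampl ns d)"
proof -
  have d: "0 < d" using assms by auto
  have "r*d+s < sum_list ns * d" "c*d+t < sum_list ns * d"
    using assms unfolding sidx_def
    by (auto simp: less_mult_imp_div_less div_less_iff_less_mult[OF d, symmetric] )
  then show ?thesis using assms same_block_ampl[OF d] unfolding sidx_def by (auto simp: sum_ampl)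
qed

definition chi :: "(complex mat \<Rightarrow> complex mat) \<Rightarrow> nat list \<Rightarrow> nat list \<Rightarrow> nat \<Rightarrow> complex mat \<Rightarrow> complex mat" where
  "chi M ns ms d X = tensor_id M (sum_list ns * d) (sum_list ms) d (kron X (maxent d))"

lemma chi_entry:
  assumes linM: "lin_on (ampl ns d) M" and intoM: "\<forall>X\<in>fdalg (ampl ns d). M X \<in> fdalg ms"
    and rc: "(r,c) \<in> sidx ns" and w: "w < sum_list ms * d" "w' < sum_list ms * d"
  shows "chi M ns ms d (munit (sum_list ns) r c) $$ (w,w') =
     (1 / of_nat d) * M (munit (sum_list ns * d) (r*d + w mod d) (c*d + w' mod d)) $$ (w div d, w' div d)"
proof -
  let ?A = "sum_list ns" and ?B = "sum_list ms"
  have d: "0 < d" using w by (metis mult_0_right not_gr_zero not_less_zero)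
  let ?s = "w mod d" and ?t = "w' mod d"
  have st: "?s < d" "?t < d" using d by auto
  have inner: "mat (?A*d) (?A*d) (\<lambda>(i, j). kron (munit ?A r c) (maxent d) $$ (i * d + ?s, j * d + ?t))
     = (1 / of_nat d) \<cdot>\<^sub>m munit (?A*d) (r*d + ?s) (c*d + ?t)"
  proof (rule eq_matI)
    fix i j assume ij: "i < dim_row ((1 / of_nat d) \<cdot>\<^sub>m munit (?A*d) (r*d + ?s) (c*d + ?t))"
        "j < dim_col ((1 / of_nat d) \<cdot>\<^sub>m munit (?A*d) (r*d + ?s) (c*d + ?t))"
    then have ij': "i < ?A*d" "j < ?A*d" by (auto simp: munit_def)
    have dv: "i div d < ?A" "j div d < ?A" using ij' d by (auto simp: div_less_iff_less_mult)
    have e1: "(i div d = r \<and> i mod d = ?s) \<longleftrightarrow> i = r*d + ?s"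
      by (metis div_mult_mod_eq divmod_pair mult.commute st(1))
    have e2: "(j div d = c \<and> j mod d = ?t) \<longleftrightarrow> j = c*d + ?t"
      by (metis div_mult_mod_eq divmod_pair mult.commute st(2))
    show "mat (?A*d) (?A*d) (\<lambda>(i, j). kron (munit ?A r c) (maxent d) $$ (i * d + ?s, j * d + ?t)) $$ (i,j)
       = ((1 / of_nat d) \<cdot>\<^sub>m munit (?A*d) (r*d + ?s) (c*d + ?t)) $$ (i,j)"
      using ij' dv st
      apply (simp add: kron_maxent_entry[of _ ?A] munit_def)
      using e1 e2 by auto
  qed (auto simp: munit_def)
  have mu: "munit (?A*d) (r*d + ?s) (c*d + ?t) \<in> fdalg (ampl ns d)"
    using munit_fdalg[OF munit_sidx_ampl[OF rc st]] by (simp add: sum_ampl)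
  have into': "\<forall>X\<in>fdalg (ampl ns d). M X \<in> carrier_mat ?B ?B" using intoM fdalg_carrier by blast
  have wd: "w div d < ?B" "w' div d < ?B" using w d by (auto simp: div_less_iff_less_mult)
  show ?thesis
    unfolding chi_def tensor_id_entry[OF w] inner
    by (rule lin_scale_entry[OF linM mu into' wd])
qed

lemma chi_fdalg:
  assumes linM: "lin_on (ampl ns d) M" and intoM: "\<forall>X\<in>fdalg (ampl ns d). M X \<in> fdalg ms"
    and rc: "(r,c) \<in> sidx ns" and d: "0 < d"
  shows "chi M ns ms d (munit (sum_list ns) r c) \<in> fdalg (ampl ms d)"
proof -
  let ?B = "sum_list ms"
  have "chi M ns ms d (munit (sum_list ns) r c) \<in> carrier_mat (?B*d) (?B*d)"
    unfolding chi_def tensor_id_def by simp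
  moreover have "chi M ns ms d (munit (sum_list ns) r c) $$ (w,w') = 0"
    if w: "w < ?B*d" "w' < ?B*d" and ns: "\<not> same_block (ampl ms d) w w'" for w w'
  proof -
    have wd: "w div d < ?B" "w' div d < ?B" using w d by (auto simp: div_less_iff_less_mult)
    have ns': "\<not> same_block ms (w div d) (w' div d)" using ns same_block_ampl[OF d] by blast
    have mu: "munit (sum_list ns * d) (r*d + w mod d) (c*d + w' mod d) \<in> fdalg (ampl ns d)"
      using munit_fdalg[OF munit_sidx_ampl[OF rc, of "w mod d" d "w' mod d"]] d by (simp add: sum_ampl)
    show ?thesis unfolding chi_entry[OF linM intoM rc w]
      using fdalg_zero[OF intoM[rule_format, OF mu] wd ns'] by simp
  qed
  ultimately show ?thesis unfolding fdalg_def by (simp add: sum_ampl)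
qed

lemma sidx_ampl_sum:
  fixes G :: "nat \<times> nat \<Rightarrow> 'a::comm_monoid_add"
  assumes d: "0 < d"
  shows "(\<Sum>w\<in>sidx (ampl ms d). G w) = (\<Sum>(U,V)\<in>sidx ms. \<Sum>s<d. \<Sum>t<d. G (U*d+s, V*d+t))"
proof -
  let ?f = "\<lambda>((U,V),(s,t)). (U*d+s, V*d+t)"
  have b: "bij_betw ?f (sidx ms \<times> ({..<d} \<times> {..<d})) (sidx (ampl ms d))"
  proof (rule bij_betw_byWitness[where f'="\<lambda>(w,w'). ((w div d, w' div d), (w mod d, w' mod d))"])
    show "\<forall>a\<in>sidx ms \<times> {..<d} \<times> {..<d}. (\<lambda>(w,w'). ((w div d, w' div d), (w mod d, w' mod d))) (?f a) = a"
      by auto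
    show "\<forall>a'\<in>sidx (ampl ms d). ?f ((\<lambda>(w,w'). ((w div d, w' div d), (w mod d, w' mod d))) a') = a'"
      by auto
    show "?f ` (sidx ms \<times> {..<d} \<times> {..<d}) \<subseteq> sidx (ampl ms d)"
      using munit_sidx_ampl by auto
    show "(\<lambda>(w,w'). ((w div d, w' div d), (w mod d, w' mod d))) ` sidx (ampl ms d) \<subseteq> sidx ms \<times> {..<d} \<times> {..<d}"
      using d by (auto simp: sidx_def sum_ampl same_block_ampl div_less_iff_less_mult)
  qed
  have "(\<Sum>w\<in>sidx (ampl ms d). G w) = (\<Sum>p\<in>sidx ms \<times> ({..<d} \<times> {..<d}). G (?f p))"
    using sum.reindex_bij_betw[OF b, of G] by simp
  also have "\<dots> = (\<Sum>(U,V)\<in>sidx ms. \<Sum>s<d. \<Sum>t<d. G (U*d+s, V*d+t))"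
    by (simp add: sum.cartesian_product split_beta)
  finally show ?thesis .
qed

lemma trace_side:
  assumes d: "0 < d"
    and linM: "lin_on (ampl ns d) M" and intoM: "\<forall>X\<in>fdalg (ampl ns d). M X \<in> fdalg ms"
    and linN: "lin_on (ampl ms d) N" and intoN: "\<forall>X\<in>fdalg (ampl ms d). N X \<in> fdalg ns"
  shows "(\<Sum>(r,c)\<in>sidx ns. N (chi M ns ms d (munit (sum_list ns) r c)) $$ (r,c)) =
    (\<Sum>(r,c)\<in>sidx ns. \<Sum>(U,V)\<in>sidx ms. \<Sum>s<d. \<Sum>t<d.
        (1 / of_nat d) * M (munit (sum_list ns * d) (r*d+s) (c*d+t)) $$ (U,V) *
        N (munit (sum_list ms * d) (U*d+s) (V*d+t)) $$ (r,c))"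
proof (rule sum.cong[OF refl], clarify)
  fix r c assume rc: "(r,c) \<in> sidx ns"
  let ?A = "sum_list ns" and ?B = "sum_list ms"
  have rcl: "r < ?A" "c < ?A" using rc unfolding sidx_def by auto
  have intoN': "\<forall>X\<in>fdalg (ampl ms d). N X \<in> carrier_mat ?A ?A" using intoN fdalg_carrier by blast
  have "N (chi M ns ms d (munit ?A r c)) $$ (r,c) =
     (\<Sum>w\<in>sidx (ampl ms d). chi M ns ms d (munit ?A r c) $$ w * N (munit (sum_list (ampl ms d)) (fst w) (snd w)) $$ (r,c))"
    by (rule expand[OF linN intoN' chi_fdalg[OF linM intoM rc d] rcl])
  also have "\<dots> = (\<Sum>(U,V)\<in>sidx ms. \<Sum>s<d. \<Sum>t<d.
        chi M ns ms d (munit ?A r c) $$ (U*d+s, V*d+t) * N (munit (?B*d) (U*d+s) (V*d+t)) $$ (r,c))"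
    by (subst sidx_ampl_sum[OF d]) (simp add: sum_ampl)
  also have "\<dots> = (\<Sum>(U,V)\<in>sidx ms. \<Sum>s<d. \<Sum>t<d.
        (1 / of_nat d) * M (munit (?A * d) (r*d+s) (c*d+t)) $$ (U,V) *
        N (munit (?B * d) (U*d+s) (V*d+t)) $$ (r,c))"
  proof (rule sum.cong[OF refl], clarify, rule sum.cong[OF refl], rule sum.cong[OF refl])
    fix U V s t assume UV: "(U,V) \<in> sidx ms" and s: "s \<in> {..<d}" and t: "t \<in> {..<d}"
    have w: "U*d+s < ?B*d" "V*d+t < ?B*d"
      using munit_sidx_ampl[OF UV, of s d t] s t unfolding sidx_def by (auto simp: sum_ampl)
    show "chi M ns ms d (munit ?A r c) $$ (U*d+s, V*d+t) * N (munit (?B*d) (U*d+s) (V*d+t)) $$ (r,c) =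
        (1 / of_nat d) * M (munit (?A * d) (r*d+s) (c*d+t)) $$ (U,V) *
        N (munit (?B * d) (U*d+s) (V*d+t)) $$ (r,c)"
      unfolding chi_entry[OF linM intoM rc w] using s t by simp
  qed
  finally show "N (chi M ns ms d (munit ?A r c)) $$ (r,c) = (\<Sum>(U,V)\<in>sidx ms. \<Sum>s<d. \<Sum>t<d.
        (1 / of_nat d) * M (munit (?A * d) (r*d+s) (c*d+t)) $$ (U,V) *
        N (munit (?B * d) (U*d+s) (V*d+t)) $$ (r,c))" .
qed


lemma swap_maxent: "swap_state d d (maxent d) = maxent d"
proof (rule eq_matI)
  fix i j assume "i < dim_row (maxent d)" "j < dim_col (maxent d)"
  then have ij: "i < d*d" "j < d*d" by (auto simp: maxent_def)
  have d0: "0 < d" using ij by (metis mult_0_right not_gr_zero not_less_zero)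
  have "i div d < d" "j div d < d" using ij by (auto simp: div_less_iff_less_mult[OF d0])
  then have e: "eta d ((i mod d) * d + i div d) = eta d i" "eta d ((j mod d) * d + j div d) = eta d j"
    by (auto simp: eta_idx eta_def)
  have lt0: "a * d + b < d*d" if "a < d" "b < d" for a b :: nat
  proof -
    have "a*d + b < a*d + d" using that by simp
    also have "\<dots> = Suc a * d" by simp
    also have "\<dots> \<le> d * d" using that by (intro mult_right_mono) auto
    finally show ?thesis .
  qed
  have lt: "(i mod d) * d + i div d < d*d" "(j mod d) * d + j div d < d*d"
    using lt0 d0 \<open>i div d < d\<close> \<open>j div d < d\<close> by auto
  show "swap_state d d (maxent d) $$ (i, j) = maxent d $$ (i, j)"
    unfolding swap_state_def using ij lt e by (simp add: maxent_def)
qed (auto simp: swap_state_def maxent_def)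

lemma channel_lin: "channel ns ms T \<Longrightarrow> lin_on ns T"
  unfolding channel_def lin_on_def by blast

lemma channel_into: "channel ns ms T \<Longrightarrow> \<forall>X\<in>fdalg ns. T X \<in> fdalg ms"
  unfolding channel_def by blast

lemma munit_diag: "r < n \<Longrightarrow> c < n \<Longrightarrow> munit n r c $$ (r,c) = 1"
  unfolding munit_def by simp

lemma sum_swap_pairs:
  "(\<Sum>(r,c)\<in>A. \<Sum>(U,V)\<in>B. F r c U V) = (\<Sum>(U,V)\<in>B. \<Sum>(r,c)\<in>A. F r c U V)"
  unfolding split_beta by (rule sum.swap)

lemma quad_swap:
  "(\<Sum>(r,c)\<in>A. \<Sum>(U,V)\<in>B. \<Sum>s<d. \<Sum>t<d. (k::complex) * f r c U V s t * g r c U V s t) =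
   (\<Sum>(U,V)\<in>B. \<Sum>(r,c)\<in>A. \<Sum>s<d. \<Sum>t<d. k * g r c U V s t * f r c U V s t)"
  by (subst sum_swap_pairs) (simp add: ac_simps)

lemma forward:
  assumes d: "0 < d" and ei: "ent_invertible ns ms d (maxent d) M"
  shows "card (sidx ns) = card (sidx ms)"
proof -
  obtain N where chM: "channel (ampl ns d) ms M" and chN: "channel (ampl ms d) ns N"
    and c1: "\<forall>\<rho> \<in> fdalg ns. N (chi M ns ms d \<rho>) = \<rho>"
    and c2: "\<forall>\<sigma> \<in> fdalg ms. M (chi N ms ns d \<sigma>) = \<sigma>"
    using ei unfolding ent_invertible_def chi_def swap_maxent by blast
  note linM = channel_lin[OF chM] and intoM = channel_into[OF chM]
  note linN = channel_lin[OF chN] and intoN = channel_into[OF chN]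
  let ?A = "sum_list ns" and ?B = "sum_list ms"
  have "of_nat (card (sidx ns)) = (\<Sum>(r,c)\<in>sidx ns. (1::complex))" by simp
  also have "\<dots> = (\<Sum>(r,c)\<in>sidx ns. N (chi M ns ms d (munit ?A r c)) $$ (r,c))"
  proof (rule sum.cong[OF refl], clarify)
    fix r c assume rc: "(r,c) \<in> sidx ns"
    have "N (chi M ns ms d (munit ?A r c)) = munit ?A r c" using c1 munit_fdalg[OF rc] by blast
    then show "1 = N (chi M ns ms d (munit ?A r c)) $$ (r,c)" using rc munit_diag by (simp add: sidx_def)
  qed
  also have "\<dots> = (\<Sum>(r,c)\<in>sidx ns. \<Sum>(U,V)\<in>sidx ms. \<Sum>s<d. \<Sum>t<d.
        (1 / of_nat d) * M (munit (?A * d) (r*d+s) (c*d+t)) $$ (U,V) *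
        N (munit (?B * d) (U*d+s) (V*d+t)) $$ (r,c))"
    by (rule trace_side[OF d linM intoM linN intoN])
  also have "\<dots> = (\<Sum>(U,V)\<in>sidx ms. \<Sum>(r,c)\<in>sidx ns. \<Sum>s<d. \<Sum>t<d.
        (1 / of_nat d) * N (munit (?B * d) (U*d+s) (V*d+t)) $$ (r,c) *
        M (munit (?A * d) (r*d+s) (c*d+t)) $$ (U,V))"
    by (rule quad_swap[of "1 / of_nat d" "\<lambda>r c U V s t. M (munit (?A*d) (r*d+s) (c*d+t)) $$ (U,V)"
         "\<lambda>r c U V s t. N (munit (?B*d) (U*d+s) (V*d+t)) $$ (r,c)" d "sidx ms" "sidx ns"])
  also have "\<dots> = (\<Sum>(U,V)\<in>sidx ms. M (chi N ms ns d (munit ?B U V)) $$ (U,V))"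
    by (rule trace_side[OF d linN intoN linM intoM, symmetric])
  also have "\<dots> = (\<Sum>(U,V)\<in>sidx ms. (1::complex))"
  proof (rule sum.cong[OF refl], clarify)
    fix r c assume rc: "(r,c) \<in> sidx ms"
    have "M (chi N ms ns d (munit ?B r c)) = munit ?B r c" using c2 munit_fdalg[OF rc] by blast
    then show "M (chi N ms ns d (munit ?B r c)) $$ (r,c) = 1" using rc munit_diag by (simp add: sidx_def)
  qed
  also have "\<dots> = of_nat (card (sidx ms))" by simp
  finally show ?thesis by (simp only: of_nat_eq_iff)
qed


definition vf :: "nat \<Rightarrow> complex mat \<Rightarrow> (nat \<times> nat \<Rightarrow> complex)" where
  "vf n X = (\<lambda>(i,j). if i < n \<and> j < n then X $$ (i,j) else 0)"

definition vscale :: "complex \<Rightarrow> (nat \<times> nat \<Rightarrow> complex) \<Rightarrow> (nat \<times> nat \<Rightarrow> complex)" where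
  "vscale c f = (\<lambda>x. c * f x)"

interpretation VS: vector_space vscale
  by unfold_locales (auto simp: vscale_def fun_eq_iff algebra_simps)

lemma fun_sum_apply: "(\<Sum>k\<in>A. f k) x = (\<Sum>k\<in>A. f k x)"
  by (induction A rule: infinite_finite_induct) auto

lemma vf_inj: "X \<in> carrier_mat n n \<Longrightarrow> Y \<in> carrier_mat n n \<Longrightarrow> vf n X = vf n Y \<Longrightarrow> X = Y"
proof (rule eq_matI)
  fix i j assume "X \<in> carrier_mat n n" "Y \<in> carrier_mat n n" "vf n X = vf n Y" "i < dim_row Y" "j < dim_col Y"
  then have "vf n X (i,j) = vf n Y (i,j)" by simp
  then show "X $$ (i,j) = Y $$ (i,j)" using \<open>i < dim_row Y\<close> \<open>j < dim_col Y\<close> \<open>Y \<in> carrier_mat n n\<close>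
    unfolding vf_def by auto
qed auto

lemma vf_lin_comb:
  "vf n (lin_comb n cs bs) = (\<Sum>k<length bs. vscale (cs k) (vf n (bs ! k)))"
  by (auto simp: fun_eq_iff vf_def lin_comb_def vscale_def fun_sum_apply)

lemma basis_distinct:
  assumes b: "is_basis ns bs"
  shows "distinct bs"
proof (rule ccontr)
  let ?N = "sum_list ns"
  assume "\<not> distinct bs"
  then obtain a b where ab: "a < length bs" "b < length bs" "a \<noteq> b" "bs ! a = bs ! b"
    unfolding distinct_conv_nth by blast
  define cs where "cs k = (if k = a then 1 else if k = b then -1 else (0::complex))" for k
  have "lin_comb ?N cs bs = 0\<^sub>m ?N ?N"
  proof (rule eq_matI)
    fix i j assume "i < dim_row (0\<^sub>m ?N ?N :: complex mat)" "j < dim_col (0\<^sub>m ?N ?N :: complex mat)"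
    then have ij: "i < ?N" "j < ?N" by auto
    have "(\<Sum>k<length bs. cs k * bs ! k $$ (i, j)) =
       (\<Sum>k<length bs. (if k = a then bs ! k $$ (i,j) else 0) - (if k = b then bs ! k $$ (i,j) else 0))"
      by (rule sum.cong) (auto simp: cs_def ab(3))
    also have "\<dots> = bs ! a $$ (i,j) - bs ! b $$ (i,j)"
      using ab by (simp add: sum_subtractf sum.delta)
    finally show "lin_comb ?N cs bs $$ (i,j) = 0\<^sub>m ?N ?N $$ (i,j)"
      using ij ab by (simp add: lin_comb_def)
  qed (auto simp: lin_comb_def)
  then have "cs a = 0" using b ab unfolding is_basis_def by blast
  then show False by (simp add: cs_def)
qed

lemma basis_dim:
  assumes b: "is_basis ns bs"
  shows "length bs = VS.dim (vf (sum_list ns) ` fdalg ns)"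
proof -
  let ?N = "sum_list ns"
  let ?B = "vf ?N ` set bs" and ?V = "vf ?N ` fdalg ns"
  have sub: "set bs \<subseteq> fdalg ns" using b unfolding is_basis_def by blast
  have car: "set bs \<subseteq> carrier_mat ?N ?N" using sub fdalg_carrier by blast
  have dist: "distinct bs" by (rule basis_distinct[OF b])
  have inj: "inj_on (vf ?N) (set bs)"
    using car vf_inj by (meson inj_onI subsetD)
  have injk: "inj_on (\<lambda>k. vf ?N (bs ! k)) {..<length bs}"
  proof (rule inj_onI)
    fix x y assume "x \<in> {..<length bs}" "y \<in> {..<length bs}" "vf ?N (bs ! x) = vf ?N (bs ! y)"
    then have "bs ! x = bs ! y" using inj_onD[OF inj] nth_mem by auto
    then show "x = y" using nth_eq_iff_index_eq[OF dist] \<open>x \<in> {..<length bs}\<close> \<open>y \<in> {..<length bs}\<close> by auto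
  qed
  have cardB: "card ?B = length bs"
    using card_image[OF inj] distinct_card[OF dist] by simp
  have BV: "?B \<subseteq> ?V" using sub by blast
  have span: "?V \<subseteq> VS.span ?B"
  proof
    fix v assume "v \<in> ?V"
    then obtain X where X: "X \<in> fdalg ns" "v = vf ?N X" by blast
    then obtain cs where "X = lin_comb ?N cs bs" using b unfolding is_basis_def by blast
    then have "v = (\<Sum>k<length bs. vscale (cs k) (vf ?N (bs ! k)))" using X vf_lin_comb by simp
    also have "\<dots> \<in> VS.span ?B"
      by (intro VS.span_sum VS.span_scale VS.span_base) auto
    finally show "v \<in> VS.span ?B" .
  qed
  have indep: "VS.independent ?B"
    unfolding VS.independent_explicit_finite_subsets
  proof (intro allI impI ballI)
    fix T u v assume T: "T \<subseteq> ?B" "finite T" and s0: "(\<Sum>v\<in>T. vscale (u v) v) = 0" and vT: "v \<in> T"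
    define cs where "cs k = (if vf ?N (bs ! k) \<in> T then u (vf ?N (bs ! k)) else 0)" for k
    let ?K = "{k \<in> {..<length bs}. vf ?N (bs ! k) \<in> T}"
    have imK: "(\<lambda>k. vf ?N (bs ! k)) ` ?K = T"
    proof
      show "(\<lambda>k. vf ?N (bs ! k)) ` ?K \<subseteq> T" by auto
      show "T \<subseteq> (\<lambda>k. vf ?N (bs ! k)) ` ?K"
      proof
        fix w assume "w \<in> T"
        then obtain Y where "Y \<in> set bs" "w = vf ?N Y" using T by blast
        then obtain k where "k < length bs" "Y = bs ! k" by (metis in_set_conv_nth)
        then show "w \<in> (\<lambda>k. vf ?N (bs ! k)) ` ?K" using \<open>w \<in> T\<close> \<open>w = vf ?N Y\<close> by blast
      qed
    qed
    have injK: "inj_on (\<lambda>k. vf ?N (bs ! k)) ?K" using injk by (rule inj_on_subset) auto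
    have "lin_comb ?N cs bs = 0\<^sub>m ?N ?N"
    proof (rule eq_matI)
      fix i j assume "i < dim_row (0\<^sub>m ?N ?N :: complex mat)" "j < dim_col (0\<^sub>m ?N ?N :: complex mat)"
      then have ij: "i < ?N" "j < ?N" by auto
      have "(\<Sum>k<length bs. cs k * bs ! k $$ (i, j)) = (\<Sum>k\<in>?K. u (vf ?N (bs ! k)) * vf ?N (bs ! k) (i,j))"
        by (rule sum.mono_neutral_cong_right) (auto simp: cs_def vf_def ij)
      also have "\<dots> = (\<Sum>w\<in>T. u w * w (i,j))"
        using sum.reindex[OF injK, of "\<lambda>w. u w * w (i,j)"] imK by simp
      also have "\<dots> = (\<Sum>w\<in>T. vscale (u w) w) (i,j)" by (simp add: fun_sum_apply vscale_def)
      also have "\<dots> = 0" using s0 by simp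
      finally show "lin_comb ?N cs bs $$ (i,j) = 0\<^sub>m ?N ?N $$ (i,j)"
        using ij by (simp add: lin_comb_def)
    qed (auto simp: lin_comb_def)
    then have cs0: "\<forall>k<length bs. cs k = 0" using b unfolding is_basis_def by blast
    obtain k where "k < length bs" "v = vf ?N (bs ! k)" using vT imK by blast
    then show "u v = 0" using cs0 vT by (auto simp: cs_def)
  qed
  show ?thesis using VS.basis_card_eq_dim[OF BV span indep] cardB by simp
qed

definition canon :: "nat list \<Rightarrow> complex mat list" where
  "canon ns = map (\<lambda>(r,c). munit (sum_list ns) r c) (sorted_list_of_set (sidx ns))"

lemma canon_basis: "is_basis ns (canon ns)"
proof -
  let ?N = "sum_list ns"
  let ?ws = "sorted_list_of_set (sidx ns)"
  have sw: "set ?ws = sidx ns" and dw: "distinct ?ws" using finite_sidx by auto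
  have len: "length (canon ns) = length ?ws" by (simp add: canon_def)
  have nth: "k < length ?ws \<Longrightarrow> canon ns ! k = munit ?N (fst (?ws ! k)) (snd (?ws ! k))" for k
    by (simp add: canon_def split_beta)
  have lc: "lin_comb ?N cs (canon ns) $$ (i,j) = (\<Sum>k<length ?ws. if ?ws ! k = (i,j) then cs k else 0)"
    if "i < ?N" "j < ?N" for cs i j
    unfolding lin_comb_def using that
    by (auto simp: len nth munit_def intro!: sum.cong split: if_splits)
  show ?thesis unfolding is_basis_def
  proof (intro conjI ballI allI impI)
    show "set (canon ns) \<subseteq> fdalg ns" using munit_fdalg sw by (auto simp: canon_def)
  next
    fix X assume X: "X \<in> fdalg ns"
    let ?cs = "\<lambda>k. X $$ (?ws ! k)"
    have "X = lin_comb ?N ?cs (canon ns)"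
    proof (rule eq_matI)
      fix i j assume ij: "i < dim_row (lin_comb ?N ?cs (canon ns))" "j < dim_col (lin_comb ?N ?cs (canon ns))"
      then have ij': "i < ?N" "j < ?N" by (auto simp: lin_comb_def)
      have "(\<Sum>k<length ?ws. if ?ws ! k = (i,j) then ?cs k else 0) = (\<Sum>w\<in>set ?ws. if w = (i,j) then X $$ w else 0)"
        by (simp add: sum.distinct_set_conv_list[OF dw] sum_list_sum_nth atLeast0LessThan)
      also have "\<dots> = (if (i,j) \<in> sidx ns then X $$ (i,j) else 0)"
        using sw finite_sidx[of ns] by (simp add: sum.delta)
      also have "\<dots> = X $$ (i,j)"
        using X ij' fdalg_zero[OF X] by (auto simp: sidx_def)
      finally show "X $$ (i,j) = lin_comb ?N ?cs (canon ns) $$ (i,j)" using lc[OF ij'] by simp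
    qed (use X in \<open>auto simp: lin_comb_def fdalg_def\<close>)
    then show "\<exists>cs. X = lin_comb ?N cs (canon ns)" by blast
  next
    fix cs k assume z: "lin_comb ?N cs (canon ns) = 0\<^sub>m ?N ?N" and k: "k < length (canon ns)"
    obtain i j where w: "?ws ! k = (i,j)" by fastforce
    have "(i,j) \<in> sidx ns" using w k sw len by (metis nth_mem)
    then have ij: "i < ?N" "j < ?N" by (auto simp: sidx_def)
    have "(\<Sum>k'<length ?ws. if ?ws ! k' = (i,j) then cs k' else 0) = (\<Sum>k'<length ?ws. if k' = k then cs k' else 0)"
    proof (rule sum.cong[OF refl])
      fix x assume "x \<in> {..<length ?ws}"
      then have "?ws ! x = (i,j) \<longleftrightarrow> x = k" using nth_eq_iff_index_eq[OF dw, of x k] w k len by auto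
      then show "(if ?ws ! x = (i,j) then cs x else 0) = (if x = k then cs x else 0)" by simp
    qed
    also have "\<dots> = cs k" using k len by (simp add: sum.delta)
    finally show "cs k = 0" using lc[OF ij, of cs] z ij by simp
  qed
qed

lemma alg_dim_card: "alg_dim ns = card (sidx ns)"
proof -
  have lc: "length (canon ns) = card (sidx ns)"
    by (simp add: canon_def finite_sidx)
  show ?thesis unfolding alg_dim_def
  proof (rule the_equality)
    show "\<exists>bs. is_basis ns bs \<and> length bs = card (sidx ns)" using canon_basis lc by blast
  next
    fix n assume "\<exists>bs. is_basis ns bs \<and> length bs = n"
    then obtain bs where "is_basis ns bs" "length bs = n" by blast
    then show "n = card (sidx ns)" using basis_dim[of ns bs] basis_dim[OF canon_basis] lc by simp
  qed
qed


definition om :: "nat \<Rightarrow> complex" where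
  "om n = cis (2 * pi / real n)"

definition wey :: "nat \<Rightarrow> nat \<Rightarrow> nat \<Rightarrow> nat \<Rightarrow> nat \<Rightarrow> complex" where
  "wey n p q a0 a = (if a0 = (a + p) mod n then om n ^ (q * a) else 0)"

lemma om_pow: "om n ^ k = cis (real k * (2 * pi / real n))"
  unfolding om_def by (simp add: DeMoivre)

lemma om_pow_n: "0 < n \<Longrightarrow> om n ^ n = 1"
  unfolding om_pow by simp

lemma om_pow_mult_n: "0 < n \<Longrightarrow> om n ^ (k * n) = 1"
  by (simp add: power_mult mult.commute[of k n] om_pow_n)

lemma om_pow_ne1:
  assumes n: "0 < n" and nd: "\<not> n dvd k"
  shows "om n ^ k \<noteq> 1"
proof
  assume "om n ^ k = 1"
  then have "Re (om n ^ k) = 1" by simp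
  then have "cos (real k * (2 * pi / real n)) = 1"
    unfolding om_pow by simp
  then obtain m :: int where m: "real k * (2 * pi / real n) = real_of_int m * 2 * pi"
    using cos_one_2pi_int by blast
  then have "real k = real_of_int m * real n" using n by (simp add: field_simps)
  then have "real_of_int (int k) = real_of_int (m * int n)" by simp
  then have "int k = m * int n" using of_int_eq_iff by blast
  then have "int n dvd int k" by simp
  then show False using nd by simp
qed

lemma root_sum:
  assumes n: "0 < n"
  shows "(\<Sum>a<n. (om n ^ k) ^ a) = (if n dvd k then of_nat n else 0)"
proof (cases "n dvd k")
  case True
  then obtain j where "k = n * j" by blast
  then have "om n ^ k = 1" using om_pow_mult_n[OF n, of j] by (simp add: mult.commute)
  then show ?thesis using True by simp
next
  case False
  have x: "om n ^ k \<noteq> 1" by (rule om_pow_ne1[OF n False])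
  have "(om n ^ k) ^ n = 1" using om_pow_mult_n[OF n, of k] by (simp add: power_mult[symmetric])
  then show ?thesis using geometric_sum[OF x, of n] False by simp
qed

lemma om_norm0: "om n ^ k * cnj (om n ^ k) = 1"
proof -
  have "norm (om n ^ k) = 1" unfolding om_pow by simp
  then show ?thesis using complex_norm_square[of "om n ^ k"] by simp
qed

lemma om_norm[simp]: "cnj (om n) ^ k * om n ^ k = 1" "om n ^ k * cnj (om n) ^ k = 1"
  using om_norm0[of n k] by (simp_all add: mult.commute)

lemma om_cnj:
  assumes n: "0 < n" and y: "y \<le> n"
  shows "cnj (om n) ^ (k*y) = om n ^ (k*(n-y))"
proof -
  have ky: "k*y \<le> k*n" using y by simp
  have "k*y + k*(n-y) = k*n" using ky by (simp add: diff_mult_distrib2)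
  then have "om n ^ (k*y) * om n ^ (k*(n-y)) = om n ^ (k*n)"
    by (simp add: power_add[symmetric])
  also have "\<dots> = 1" using om_pow_mult_n[OF n] by (simp add: mult.commute)
  finally have e: "om n ^ (k*y) * om n ^ (k*(n-y)) = 1" .
  have "cnj (om n) ^ (k*y) = cnj (om n) ^ (k*y) * (om n ^ (k*y) * om n ^ (k*(n-y)))" using e by simp
  also have "\<dots> = om n ^ (k*(n-y))" using om_norm(1)[of n "k*y"] by (simp add: mult.assoc[symmetric])
  finally show ?thesis .
qed

lemma char_sum:
  assumes n: "0 < n" and xy: "x < n" "y < n"
  shows "(\<Sum>k<n. om n ^ (k*x) * cnj (om n) ^ (k*y)) = (if x = y then of_nat n else 0)"
proof -
  have "(\<Sum>k<n. om n ^ (k*x) * cnj (om n) ^ (k*y)) = (\<Sum>k<n. (om n ^ (x + (n - y))) ^ k)"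
  proof (rule sum.cong[OF refl])
    fix k assume "k \<in> {..<n}"
    have "om n ^ (k*x) * cnj (om n) ^ (k*y) = om n ^ (k*x) * om n ^ (k*(n-y))"
      using om_cnj[OF n, of y k] xy by simp
    also have "\<dots> = om n ^ (k*x + k*(n-y))" by (simp add: power_add)
    also have "\<dots> = (om n ^ (x + (n - y))) ^ k" by (simp add: power_mult[symmetric] algebra_simps)
    finally show "om n ^ (k*x) * cnj (om n) ^ (k*y) = (om n ^ (x + (n - y))) ^ k" .
  qed
  also have "\<dots> = (if n dvd (x + (n - y)) then of_nat n else 0)" by (rule root_sum[OF n])
  also have "(n dvd (x + (n - y))) \<longleftrightarrow> x = y"
  proof
    assume "n dvd (x + (n - y))"
    moreover have "0 < x + (n - y)" "x + (n - y) < 2 * n" using xy by auto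
    ultimately have "x + (n - y) = n"
    proof -
      assume dv: "n dvd (x + (n - y))" and b: "0 < x + (n - y)" "x + (n - y) < 2 * n"
      obtain k where k: "x + (n - y) = n * k" using dv by blast
      have "k \<noteq> 0" using k b by auto
      moreover have "n * k < n * 2" using k b by (simp add: mult.commute)
      then have "k < 2" by simp
      ultimately have "k = 1" by simp
      then show ?thesis using k by simp
    qed
    then show "x = y" using xy by simp
  qed (use xy in simp)
  finally show ?thesis by simp
qed

lemma shift_inj: "(x::nat) < n \<Longrightarrow> y < n \<Longrightarrow> (x + c) mod n = (y + c) mod n \<Longrightarrow> x = y"
proof (rule ccontr)
  assume xy: "x < n" "y < n" and e: "(x + c) mod n = (y + c) mod n" and ne: "x \<noteq> y"
  have "int ((x + c) mod n) = int ((y + c) mod n)" using e by simp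
  then have "(int x + int c) mod int n = (int y + int c) mod int n" by (simp add: of_nat_mod)
  then have "int n dvd (int x + int c) - (int y + int c)" by (simp add: mod_eq_dvd_iff)
  then have d: "int n dvd int x - int y" by simp
  have "int x - int y \<noteq> 0" using ne by simp
  then have "\<bar>int n\<bar> \<le> \<bar>int x - int y\<bar>" using dvd_imp_le_int d by blast
  then show False using xy by linarith
qed

lemma shift_sum:
  fixes g :: "nat \<Rightarrow> 'a::comm_monoid_add"
  assumes n: "0 < n"
  shows "(\<Sum>x<n. g ((x + c) mod n)) = (\<Sum>y<n. g y)"
proof -
  have inj: "inj_on (\<lambda>x. (x + c) mod n) {..<n}"
    by (rule inj_onI) (use shift_inj in auto)
  have im: "(\<lambda>x. (x + c) mod n) ` {..<n} = {..<n}"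
    using inj n by (intro endo_inj_surj) auto
  show ?thesis using sum.reindex[OF inj, of g] im by simp
qed

lemma delta2:
  assumes "(a0::nat) < n"
  shows "(\<Sum>y<n. if a0 = y \<and> a1 = y then c else 0) = (if a0 = a1 then c else 0)"
proof -
  have "(\<Sum>y<n. if a0 = y \<and> a1 = y then c else 0) = (\<Sum>y<n. if y = a0 then (if a0 = a1 then c else 0) else 0)"
    by (intro sum.cong) auto
  then show ?thesis using assms by (simp add: sum.delta)
qed

lemma wey_row:
  assumes n: "0 < n" and a: "a0 < n" "a1 < n"
  shows "(\<Sum>a<n. wey n p q a0 a * cnj (wey n p q a1 a)) = (if a0 = a1 then 1 else 0)"
proof -
  have "(\<Sum>a<n. wey n p q a0 a * cnj (wey n p q a1 a)) =
        (\<Sum>a<n. (\<lambda>y. if a0 = y \<and> a1 = y then 1 else 0) ((a + p) mod n))"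
    by (intro sum.cong refl) (auto simp: wey_def)
  also have "\<dots> = (\<Sum>y<n. if a0 = y \<and> a1 = y then 1 else 0)" by (rule shift_sum[OF n])
  also have "\<dots> = (if a0 = a1 then 1 else 0)" using a by (simp add: delta2)
  finally show ?thesis .
qed

lemma wey_col:
  assumes n: "0 < n" and a: "a < n" "a' < n" and p: "p < n"
  shows "(\<Sum>a0<n. cnj (wey n p q a0 a) * wey n p q a0 a') = (if a = a' then 1 else 0)"
proof -
  have "(\<Sum>a0<n. cnj (wey n p q a0 a) * wey n p q a0 a') =
     (\<Sum>a0<n. if a0 = (a + p) mod n then (if (a + p) mod n = (a' + p) mod n then cnj (om n) ^ (q*a) * om n ^ (q*a') else 0) else 0)"
    by (intro sum.cong refl) (auto simp: wey_def)
  also have "\<dots> = (if (a + p) mod n = (a' + p) mod n then cnj (om n) ^ (q*a) * om n ^ (q*a') else 0)"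
    using n by (simp add: sum.delta)
  also have "\<dots> = (if a = a' then 1 else 0)"
    using shift_inj[OF a, of p] by auto
  finally show ?thesis .
qed

lemma wey_orth:
  assumes n: "0 < n" and pq: "p < n" "q < n" "p' < n" "q' < n"
  shows "(\<Sum>a0<n. \<Sum>a<n. cnj (wey n p q a0 a) * wey n p' q' a0 a) = (if p = p' \<and> q = q' then of_nat n else 0)"
proof -
  have "(\<Sum>a0<n. \<Sum>a<n. cnj (wey n p q a0 a) * wey n p' q' a0 a) =
     (\<Sum>a<n. \<Sum>a0<n. cnj (wey n p q a0 a) * wey n p' q' a0 a)" by (rule sum.swap)
  also have "\<dots> = (\<Sum>a<n. if (a + p) mod n = (a + p') mod n then om n ^ (a*q') * cnj (om n) ^ (a*q) else 0)"
  proof (rule sum.cong[OF refl])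
    fix a assume "a \<in> {..<n}"
    have "(\<Sum>a0<n. cnj (wey n p q a0 a) * wey n p' q' a0 a) =
        (\<Sum>a0<n. if a0 = (a + p) mod n then (if (a + p) mod n = (a + p') mod n then om n ^ (a*q') * cnj (om n) ^ (a*q) else 0) else 0)"
      by (intro sum.cong refl) (auto simp: wey_def mult.commute)
    also have "\<dots> = (if (a + p) mod n = (a + p') mod n then om n ^ (a*q') * cnj (om n) ^ (a*q) else 0)"
      using n by (simp add: sum.delta)
    finally show "(\<Sum>a0<n. cnj (wey n p q a0 a) * wey n p' q' a0 a) = \<dots>" .
  qed
  also have "\<dots> = (\<Sum>a<n. if p = p' then om n ^ (a*q') * cnj (om n) ^ (a*q) else 0)"
  proof (rule sum.cong[OF refl])
    fix a assume "a \<in> {..<n}"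
    have "(a + p) mod n = (a + p') mod n \<longleftrightarrow> p = p'"
      using shift_inj[OF pq(1) pq(3), of a] by (auto simp: add.commute)
    then show "(if (a + p) mod n = (a + p') mod n then om n ^ (a*q') * cnj (om n) ^ (a*q) else 0) =
        (if p = p' then om n ^ (a*q') * cnj (om n) ^ (a*q) else 0)" by simp
  qed
  also have "\<dots> = (if p = p' \<and> q = q' then of_nat n else 0)"
    using char_sum[OF n pq(4) pq(2)] by (cases "p = p'") auto
  finally show ?thesis .
qed

lemma wey_compl:
  assumes n: "0 < n" and a: "a0 < n" "a < n" "a0' < n" "a' < n"
  shows "(\<Sum>p<n. \<Sum>q<n. wey n p q a0 a * cnj (wey n p q a0' a')) =
      (if a0 = a0' \<and> a = a' then of_nat n else 0)"
proof -
  have "(\<Sum>p<n. \<Sum>q<n. wey n p q a0 a * cnj (wey n p q a0' a')) =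
     (\<Sum>p<n. if a0 = (a + p) mod n \<and> a0' = (a' + p) mod n then (if a = a' then of_nat n else 0) else 0)"
  proof (rule sum.cong[OF refl])
    fix p assume "p \<in> {..<n}"
    have "(\<Sum>q<n. wey n p q a0 a * cnj (wey n p q a0' a')) =
       (if a0 = (a + p) mod n \<and> a0' = (a' + p) mod n then (\<Sum>q<n. om n ^ (q*a) * cnj (om n) ^ (q*a')) else 0)"
      by (auto simp: wey_def)
    also have "\<dots> = (if a0 = (a + p) mod n \<and> a0' = (a' + p) mod n then (if a = a' then of_nat n else 0) else 0)"
      using char_sum[OF n a(2) a(4)] by simp
    finally show "(\<Sum>q<n. wey n p q a0 a * cnj (wey n p q a0' a')) = \<dots>" .
  qed
  also have "\<dots> = (if a0 = a0' \<and> a = a' then of_nat n else 0)"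
  proof (cases "a = a'")
    case True
    have "(\<Sum>p<n. if a0 = (a + p) mod n \<and> a0' = (a' + p) mod n then (if a = a' then of_nat n else 0) else 0)
        = (\<Sum>p<n. (\<lambda>y. if a0 = y \<and> a0' = y then of_nat n else 0) ((p + a) mod n))"
      using True by (intro sum.cong refl) (simp add: add.commute)
    also have "\<dots> = (\<Sum>y<n. if a0 = y \<and> a0' = y then of_nat n else 0)"
      by (rule shift_sum[OF n])
    also have "\<dots> = (if a0 = a0' then of_nat n else 0)"
      using a by (simp add: delta2)
    finally show ?thesis using True by simp
  next
    case False
    then show ?thesis by simp
  qed
  finally show ?thesis .
qed


definition kmap :: "nat \<Rightarrow> nat \<Rightarrow> 'k set \<Rightarrow> ('k \<Rightarrow> nat \<Rightarrow> nat \<Rightarrow> complex) \<Rightarrow> complex mat \<Rightarrow> complex mat" where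
  "kmap m n I K Y = mat m m (\<lambda>(u,v). \<Sum>\<kappa>\<in>I. \<Sum>s<n. \<Sum>t<n. K \<kappa> u s * Y $$ (s,t) * cnj (K \<kappa> v t))"

lemma sum5_perm:
  fixes f :: "'a \<Rightarrow> 'b \<Rightarrow> 'c \<Rightarrow> 'd \<Rightarrow> 'e \<Rightarrow> 'z::comm_monoid_add"
  shows "(\<Sum>r\<in>A. \<Sum>c\<in>B. \<Sum>k\<in>C. \<Sum>s\<in>D. \<Sum>t\<in>E. f r c k s t) =
         (\<Sum>k\<in>C. \<Sum>s\<in>D. \<Sum>t\<in>E. \<Sum>r\<in>A. \<Sum>c\<in>B. f r c k s t)"
proof -
  have "(\<Sum>r\<in>A. \<Sum>c\<in>B. \<Sum>k\<in>C. \<Sum>s\<in>D. \<Sum>t\<in>E. f r c k s t) =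
        (\<Sum>r\<in>A. \<Sum>k\<in>C. \<Sum>s\<in>D. \<Sum>t\<in>E. \<Sum>c\<in>B. f r c k s t)"
  proof (rule sum.cong[OF refl])
    fix r
    have "(\<Sum>c\<in>B. \<Sum>k\<in>C. \<Sum>s\<in>D. \<Sum>t\<in>E. f r c k s t) = (\<Sum>k\<in>C. \<Sum>c\<in>B. \<Sum>s\<in>D. \<Sum>t\<in>E. f r c k s t)"
      by (rule sum.swap)
    also have "\<dots> = (\<Sum>k\<in>C. \<Sum>s\<in>D. \<Sum>c\<in>B. \<Sum>t\<in>E. f r c k s t)"
      by (rule sum.cong[OF refl], rule sum.swap)
    also have "\<dots> = (\<Sum>k\<in>C. \<Sum>s\<in>D. \<Sum>t\<in>E. \<Sum>c\<in>B. f r c k s t)"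
      by (rule sum.cong[OF refl], rule sum.cong[OF refl], rule sum.swap)
    finally show "(\<Sum>c\<in>B. \<Sum>k\<in>C. \<Sum>s\<in>D. \<Sum>t\<in>E. f r c k s t) = (\<Sum>k\<in>C. \<Sum>s\<in>D. \<Sum>t\<in>E. \<Sum>c\<in>B. f r c k s t)" .
  qed
  also have "\<dots> = (\<Sum>k\<in>C. \<Sum>r\<in>A. \<Sum>s\<in>D. \<Sum>t\<in>E. \<Sum>c\<in>B. f r c k s t)" by (rule sum.swap)
  also have "\<dots> = (\<Sum>k\<in>C. \<Sum>s\<in>D. \<Sum>r\<in>A. \<Sum>t\<in>E. \<Sum>c\<in>B. f r c k s t)"
    by (rule sum.cong[OF refl], rule sum.swap)
  also have "\<dots> = (\<Sum>k\<in>C. \<Sum>s\<in>D. \<Sum>t\<in>E. \<Sum>r\<in>A. \<Sum>c\<in>B. f r c k s t)"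
    by (rule sum.cong[OF refl], rule sum.cong[OF refl], rule sum.swap)
  finally show ?thesis .
qed

lemma sum4_perm:
  fixes f :: "'a \<Rightarrow> 'b \<Rightarrow> 'c \<Rightarrow> 'd \<Rightarrow> 'z::comm_monoid_add"
  shows "(\<Sum>u\<in>A. \<Sum>k\<in>B. \<Sum>s\<in>C. \<Sum>t\<in>D. f u k s t) =
         (\<Sum>s\<in>C. \<Sum>t\<in>D. \<Sum>k\<in>B. \<Sum>u\<in>A. f u k s t)"
proof -
  have "(\<Sum>u\<in>A. \<Sum>k\<in>B. \<Sum>s\<in>C. \<Sum>t\<in>D. f u k s t) = (\<Sum>k\<in>B. \<Sum>u\<in>A. \<Sum>s\<in>C. \<Sum>t\<in>D. f u k s t)"
    by (rule sum.swap)
  also have "\<dots> = (\<Sum>k\<in>B. \<Sum>s\<in>C. \<Sum>t\<in>D. \<Sum>u\<in>A. f u k s t)"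
  proof (rule sum.cong[OF refl])
    fix k
    have "(\<Sum>u\<in>A. \<Sum>s\<in>C. \<Sum>t\<in>D. f u k s t) = (\<Sum>s\<in>C. \<Sum>u\<in>A. \<Sum>t\<in>D. f u k s t)" by (rule sum.swap)
    also have "\<dots> = (\<Sum>s\<in>C. \<Sum>t\<in>D. \<Sum>u\<in>A. f u k s t)" by (rule sum.cong[OF refl], rule sum.swap)
    finally show "(\<Sum>u\<in>A. \<Sum>s\<in>C. \<Sum>t\<in>D. f u k s t) = (\<Sum>s\<in>C. \<Sum>t\<in>D. \<Sum>u\<in>A. f u k s t)" .
  qed
  also have "\<dots> = (\<Sum>s\<in>C. \<Sum>k\<in>B. \<Sum>t\<in>D. \<Sum>u\<in>A. f u k s t)" by (rule sum.swap)
  also have "\<dots> = (\<Sum>s\<in>C. \<Sum>t\<in>D. \<Sum>k\<in>B. \<Sum>u\<in>A. f u k s t)" by (rule sum.cong[OF refl], rule sum.swap)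
  finally show ?thesis .
qed

lemma kmap_carrier: "kmap m n I K Y \<in> carrier_mat m m"
  unfolding kmap_def by simp

lemma kmap_lin:
  assumes "X \<in> carrier_mat n n" "Y \<in> carrier_mat n n"
  shows "kmap m n I K (a \<cdot>\<^sub>m X + b \<cdot>\<^sub>m Y) = a \<cdot>\<^sub>m kmap m n I K X + b \<cdot>\<^sub>m kmap m n I K Y"
proof (rule eq_matI)
  fix u v assume uv: "u < dim_row (a \<cdot>\<^sub>m kmap m n I K X + b \<cdot>\<^sub>m kmap m n I K Y)"
    "v < dim_col (a \<cdot>\<^sub>m kmap m n I K X + b \<cdot>\<^sub>m kmap m n I K Y)"
  then have uv': "u < m" "v < m" by (auto simp: kmap_def)
  have e: "(a \<cdot>\<^sub>m X + b \<cdot>\<^sub>m Y) $$ (s,t) = a * X $$ (s,t) + b * Y $$ (s,t)" if "s < n" "t < n" for s t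
    using assms that by simp
  show "kmap m n I K (a \<cdot>\<^sub>m X + b \<cdot>\<^sub>m Y) $$ (u,v) = (a \<cdot>\<^sub>m kmap m n I K X + b \<cdot>\<^sub>m kmap m n I K Y) $$ (u,v)"
    using uv' by (simp add: kmap_def e sum_distrib_left sum.distrib algebra_simps)
qed (auto simp: kmap_def)

lemma kmap_trace:
  assumes TP: "\<And>s t. s < n \<Longrightarrow> t < n \<Longrightarrow> (\<Sum>\<kappa>\<in>I. \<Sum>u<m. cnj (K \<kappa> u t) * K \<kappa> u s) = (if s = t then 1 else 0)"
  shows "mtrace (kmap m n I K Y) = (\<Sum>s<n. Y $$ (s,s))"
proof -
  have "mtrace (kmap m n I K Y) = (\<Sum>u<m. \<Sum>\<kappa>\<in>I. \<Sum>s<n. \<Sum>t<n. K \<kappa> u s * Y $$ (s,t) * cnj (K \<kappa> u t))"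
    unfolding mtrace_def kmap_def by simp
  also have "\<dots> = (\<Sum>s<n. \<Sum>t<n. \<Sum>\<kappa>\<in>I. \<Sum>u<m. K \<kappa> u s * Y $$ (s,t) * cnj (K \<kappa> u t))"
    by (rule sum4_perm)
  also have "\<dots> = (\<Sum>s<n. \<Sum>t<n. Y $$ (s,t) * (\<Sum>\<kappa>\<in>I. \<Sum>u<m. cnj (K \<kappa> u t) * K \<kappa> u s))"
    by (simp add: sum_distrib_left mult_ac)
  also have "\<dots> = (\<Sum>s<n. \<Sum>t<n. if t = s then Y $$ (s,t) else 0)"
    by (intro sum.cong refl) (simp add: TP)
  also have "\<dots> = (\<Sum>s<n. Y $$ (s,s))" by (simp add: sum.delta)
  finally show ?thesis .
qed

lemma kmap_fdalg:
  assumes blk: "\<And>\<kappa> u v s t. \<kappa> \<in> I \<Longrightarrow> u < sum_list ms \<Longrightarrow> v < sum_list ms \<Longrightarrow>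
       K \<kappa> u s \<noteq> 0 \<Longrightarrow> K \<kappa> v t \<noteq> 0 \<Longrightarrow> same_block ms u v"
  shows "kmap (sum_list ms) n I K Y \<in> fdalg ms"
  unfolding fdalg_def
proof (intro CollectI conjI allI impI)
  show "kmap (sum_list ms) n I K Y \<in> carrier_mat (sum_list ms) (sum_list ms)" by (rule kmap_carrier)
  fix u v assume uv: "u < sum_list ms" "v < sum_list ms" "\<not> same_block ms u v"
  have z: "K \<kappa> u s * Y $$ (s,t) * cnj (K \<kappa> v t) = 0" if "\<kappa> \<in> I" for \<kappa> s t
    using blk[OF that uv(1,2), of s t] uv(3) by auto
  have "(\<Sum>\<kappa>\<in>I. \<Sum>s<n. \<Sum>t<n. K \<kappa> u s * Y $$ (s,t) * cnj (K \<kappa> v t)) = 0"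
    by (intro sum.neutral ballI) (simp add: z)
  then show "kmap (sum_list ms) n I K Y $$ (u, v) = 0"
    using uv by (simp add: kmap_def)
qed

definition ktil :: "nat \<Rightarrow> ('k \<Rightarrow> nat \<Rightarrow> nat \<Rightarrow> complex) \<Rightarrow> 'k \<Rightarrow> nat \<Rightarrow> nat \<Rightarrow> complex" where
  "ktil k K \<kappa> r \<sigma> = (if r mod k = \<sigma> mod k then K \<kappa> (r div k) (\<sigma> div k) else 0)"

lemma ktil_split: "i' < k \<Longrightarrow> ktil k K \<kappa> r (s*k+i') = (if r mod k = i' then K \<kappa> (r div k) s else 0)"
  unfolding ktil_def by simp

lemma delta_r: "(j::nat) < k \<Longrightarrow> (\<Sum>j'<k. f j' * (if j = j' then y else 0)) = f j * (y::complex)"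
proof -
  assume j: "j < k"
  have "(\<Sum>j'<k. f j' * (if j = j' then y else 0)) = (\<Sum>j'<k. if j' = j then f j' * y else 0)"
    by (intro sum.cong) auto
  then show ?thesis using j by (simp add: sum.delta)
qed

lemma delta_l: "(i::nat) < k \<Longrightarrow> (\<Sum>i'<k. (if i = i' then y else 0) * f i') = (y::complex) * f i"
proof -
  assume i: "i < k"
  have "(\<Sum>i'<k. (if i = i' then y else 0) * f i') = (\<Sum>i'<k. if i' = i then y * f i' else 0)"
    by (intro sum.cong) auto
  then show ?thesis using i by (simp add: sum.delta)
qed

lemma tensor_kmap_entry:
  assumes rc: "r < m*k" "c < m*k"
  shows "tensor_id (kmap m n I K) n m k Z $$ (r,c) =
    (\<Sum>\<kappa>\<in>I. \<Sum>\<sigma><n*k. \<Sum>\<tau><n*k. ktil k K \<kappa> r \<sigma> * Z $$ (\<sigma>,\<tau>) * cnj (ktil k K \<kappa> c \<tau>))"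
proof -
  have k: "0 < k" using rc by (metis mult_0_right not_gr_zero not_less_zero)
  let ?i = "r mod k" and ?j = "c mod k" and ?R = "r div k" and ?C = "c div k"
  have ij: "?i < k" "?j < k" using k by auto
  have R: "?R < m" "?C < m" using rc k by (auto simp: div_less_iff_less_mult)
  have "tensor_id (kmap m n I K) n m k Z $$ (r,c) =
     (\<Sum>\<kappa>\<in>I. \<Sum>s<n. \<Sum>t<n. K \<kappa> ?R s * Z $$ (s*k + ?i, t*k + ?j) * cnj (K \<kappa> ?C t))"
    unfolding tensor_id_entry[OF rc] kmap_def using R by simp
  also have "\<dots> = (\<Sum>\<kappa>\<in>I. \<Sum>s<n. \<Sum>i'<k. \<Sum>t<n. \<Sum>j'<k. ktil k K \<kappa> r (s*k+i') * Z $$ (s*k+i', t*k+j') * cnj (ktil k K \<kappa> c (t*k+j')))"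
  proof (rule sum.cong[OF refl], rule sum.cong[OF refl])
    fix \<kappa> s assume "\<kappa> \<in> I" "s \<in> {..<n}"
    have "(\<Sum>i'<k. \<Sum>t<n. \<Sum>j'<k. ktil k K \<kappa> r (s*k+i') * Z $$ (s*k+i', t*k+j') * cnj (ktil k K \<kappa> c (t*k+j'))) =
       (\<Sum>i'<k. \<Sum>t<n. \<Sum>j'<k. (if ?i = i' then K \<kappa> ?R s else 0) * Z $$ (s*k+i', t*k+j') * (if ?j = j' then cnj (K \<kappa> ?C t) else 0))"
      by (intro sum.cong refl) (simp add: ktil_split)
    also have "\<dots> = (\<Sum>i'<k. \<Sum>t<n. (if ?i = i' then K \<kappa> ?R s else 0) * (Z $$ (s*k+i', t*k+?j) * cnj (K \<kappa> ?C t)))"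
      by (intro sum.cong refl, subst delta_r[OF ij(2)], simp add: mult.assoc)
    also have "\<dots> = (\<Sum>i'<k. (if ?i = i' then K \<kappa> ?R s else 0) * (\<Sum>t<n. Z $$ (s*k+i', t*k+?j) * cnj (K \<kappa> ?C t)))"
      by (simp add: sum_distrib_left)
    also have "\<dots> = K \<kappa> ?R s * (\<Sum>t<n. Z $$ (s*k+?i, t*k+?j) * cnj (K \<kappa> ?C t))"
      by (rule delta_l[OF ij(1)])
    also have "\<dots> = (\<Sum>t<n. K \<kappa> ?R s * Z $$ (s*k + ?i, t*k + ?j) * cnj (K \<kappa> ?C t))"
      by (simp add: sum_distrib_left mult.assoc)
    finally show "(\<Sum>t<n. K \<kappa> ?R s * Z $$ (s*k + ?i, t*k + ?j) * cnj (K \<kappa> ?C t)) =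
      (\<Sum>i'<k. \<Sum>t<n. \<Sum>j'<k. ktil k K \<kappa> r (s*k+i') * Z $$ (s*k+i', t*k+j') * cnj (ktil k K \<kappa> c (t*k+j')))" by simp
  qed
  also have "\<dots> = (\<Sum>\<kappa>\<in>I. \<Sum>\<sigma><n*k. \<Sum>\<tau><n*k. ktil k K \<kappa> r \<sigma> * Z $$ (\<sigma>,\<tau>) * cnj (ktil k K \<kappa> c \<tau>))"
    by (simp add: sum_split_mult)
  finally show ?thesis .
qed

lemma quad_abstract:
  fixes A :: "'k \<Rightarrow> nat \<Rightarrow> nat \<Rightarrow> complex" and Z :: "nat \<Rightarrow> nat \<Rightarrow> complex"
  shows "(\<Sum>r<M. \<Sum>c<M. cnj (v r) * (\<Sum>\<kappa>\<in>I. \<Sum>\<sigma><N. \<Sum>\<tau><N. A \<kappa> r \<sigma> * Z \<sigma> \<tau> * cnj (A \<kappa> c \<tau>)) * v c) =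
    (\<Sum>\<kappa>\<in>I. \<Sum>\<sigma><N. \<Sum>\<tau><N. cnj (\<Sum>r<M. cnj (A \<kappa> r \<sigma>) * v r) * Z \<sigma> \<tau> * (\<Sum>c<M. cnj (A \<kappa> c \<tau>) * v c))"
proof -
  have "(\<Sum>r<M. \<Sum>c<M. cnj (v r) * (\<Sum>\<kappa>\<in>I. \<Sum>\<sigma><N. \<Sum>\<tau><N. A \<kappa> r \<sigma> * Z \<sigma> \<tau> * cnj (A \<kappa> c \<tau>)) * v c) =
     (\<Sum>r<M. \<Sum>c<M. \<Sum>\<kappa>\<in>I. \<Sum>\<sigma><N. \<Sum>\<tau><N. cnj (v r) * A \<kappa> r \<sigma> * Z \<sigma> \<tau> * cnj (A \<kappa> c \<tau>) * v c)"
    by (simp add: sum_distrib_left sum_distrib_right mult_ac)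
  also have "\<dots> = (\<Sum>\<kappa>\<in>I. \<Sum>\<sigma><N. \<Sum>\<tau><N. \<Sum>r<M. \<Sum>c<M. cnj (v r) * A \<kappa> r \<sigma> * Z \<sigma> \<tau> * cnj (A \<kappa> c \<tau>) * v c)"
    by (rule sum5_perm)
  also have "\<dots> = (\<Sum>\<kappa>\<in>I. \<Sum>\<sigma><N. \<Sum>\<tau><N. cnj (\<Sum>r<M. cnj (A \<kappa> r \<sigma>) * v r) * Z \<sigma> \<tau> * (\<Sum>c<M. cnj (A \<kappa> c \<tau>) * v c))"
    by (simp add: sum_distrib_left sum_distrib_right mult_ac)
  finally show ?thesis .
qed

lemma kmap_cp:
  assumes fin: "finite I" and k: "0 < k" and Z: "psd (n*k) Z"
  shows "psd (m*k) (tensor_id (kmap m n I K) n m k Z)"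
  unfolding psd_def
proof (intro conjI allI)
  show "tensor_id (kmap m n I K) n m k Z \<in> carrier_mat (m*k) (m*k)" by (simp add: tensor_id_def)
  fix v :: "nat \<Rightarrow> complex"
  let ?T = "tensor_id (kmap m n I K) n m k Z"
  define w where "w \<kappa> \<sigma> = (\<Sum>r<m*k. cnj (ktil k K \<kappa> r \<sigma>) * v r)" for \<kappa> \<sigma>
  define q where "q \<kappa> = (\<Sum>\<sigma><n*k. \<Sum>\<tau><n*k. cnj (w \<kappa> \<sigma>) * Z $$ (\<sigma>,\<tau>) * w \<kappa> \<tau>)" for \<kappa>
  have "(\<Sum>r<m*k. \<Sum>c<m*k. cnj (v r) * ?T $$ (r,c) * v c) =
     (\<Sum>r<m*k. \<Sum>c<m*k. cnj (v r) * (\<Sum>\<kappa>\<in>I. \<Sum>\<sigma><n*k. \<Sum>\<tau><n*k. ktil k K \<kappa> r \<sigma> * Z $$ (\<sigma>,\<tau>) * cnj (ktil k K \<kappa> c \<tau>)) * v c)"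
    by (intro sum.cong refl) (simp add: tensor_kmap_entry)
  also have "\<dots> = (\<Sum>\<kappa>\<in>I. q \<kappa>)"
    unfolding quad_abstract[where v=v and M="m*k" and I=I and N="n*k" and A="ktil k K" and Z="\<lambda>\<sigma> \<tau>. Z $$ (\<sigma>,\<tau>)"] q_def w_def ..
  finally have eq: "(\<Sum>r<m*k. \<Sum>c<m*k. cnj (v r) * ?T $$ (r,c) * v c) = (\<Sum>\<kappa>\<in>I. q \<kappa>)" .
  have qk: "Im (q \<kappa>) = 0 \<and> 0 \<le> Re (q \<kappa>)" for \<kappa>
    using Z unfolding psd_def q_def by blast
  show "Im (\<Sum>r<m*k. \<Sum>c<m*k. cnj (v r) * ?T $$ (r,c) * v c) = 0"
    unfolding eq Im_sum using qk by simp
  show "0 \<le> Re (\<Sum>r<m*k. \<Sum>c<m*k. cnj (v r) * ?T $$ (r,c) * v c)"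
    unfolding eq Re_sum using qk by (simp add: sum_nonneg)
qed


definition lab :: "nat list \<Rightarrow> (nat \<times> nat \<times> nat) set" where
  "lab ns = (SIGMA i:{..<length ns}. {..<ns!i} \<times> {..<ns!i})"

definition KI :: "nat list \<Rightarrow> nat list \<Rightarrow> (nat\<times>nat\<times>nat \<Rightarrow> nat\<times>nat\<times>nat) \<Rightarrow> nat \<Rightarrow> nat \<Rightarrow> ((nat\<times>nat\<times>nat) \<times> nat \<times> nat) set" where
  "KI ns ms f P Q = (SIGMA x:lab ns. {..<P div (ns ! fst x)} \<times> {..<Q div (ms ! fst (f x))})"

definition Apart :: "nat list \<Rightarrow> nat \<Rightarrow> nat\<times>nat\<times>nat \<Rightarrow> nat \<Rightarrow> nat \<Rightarrow> nat \<Rightarrow> complex" where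
  "Apart ns P x c a r0 = (if inb ns (fst x) r0 \<and> a mod (P div (ns ! fst x)) = c
     then complex_of_real (1 / sqrt (real (ns ! fst x))) *
       cnj (wey (ns ! fst x) (fst (snd x)) (snd (snd x)) (r0 - blk_off ns (fst x)) (a div (P div (ns ! fst x))))
     else 0)"

definition Bpart :: "nat list \<Rightarrow> nat \<Rightarrow> nat\<times>nat\<times>nat \<Rightarrow> nat \<Rightarrow> nat \<Rightarrow> nat \<Rightarrow> complex" where
  "Bpart ms Q y c b u = (if inb ms (fst y) u \<and> b mod (Q div (ms ! fst y)) = c
     then wey (ms ! fst y) (fst (snd y)) (snd (snd y)) (u - blk_off ms (fst y)) (b div (Q div (ms ! fst y)))
     else 0)"

definition KC :: "nat list \<Rightarrow> nat list \<Rightarrow> (nat\<times>nat\<times>nat \<Rightarrow> nat\<times>nat\<times>nat) \<Rightarrow> nat \<Rightarrow> nat \<Rightarrow> nat \<Rightarrow>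
    (nat \<Rightarrow> nat) \<Rightarrow> (nat \<Rightarrow> nat) \<Rightarrow> (nat\<times>nat\<times>nat) \<times> nat \<times> nat \<Rightarrow> nat \<Rightarrow> nat \<Rightarrow> complex" where
  "KC ns ms f d P Q l1 l2 \<kappa> u s =
     Apart ns P (fst \<kappa>) (fst (snd \<kappa>)) (l1 (s mod d)) (s div d) * Bpart ms Q (f (fst \<kappa>)) (snd (snd \<kappa>)) (l2 (s mod d)) u"

definition chanK :: "nat list \<Rightarrow> nat list \<Rightarrow> (nat\<times>nat\<times>nat \<Rightarrow> nat\<times>nat\<times>nat) \<Rightarrow> nat \<Rightarrow> nat \<Rightarrow> nat \<Rightarrow>
    (nat \<Rightarrow> nat) \<Rightarrow> (nat \<Rightarrow> nat) \<Rightarrow> complex mat \<Rightarrow> complex mat" where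
  "chanK ns ms f d P Q l1 l2 = kmap (sum_list ms) (sum_list ns * d) (KI ns ms f P Q) (KC ns ms f d P Q l1 l2)"

lemma finite_lab: "finite (lab ns)"
  unfolding lab_def by auto

lemma finite_KI: "finite (KI ns ms f P Q)"
  unfolding KI_def using finite_lab by auto

lemma layout_sum:
  fixes G :: "nat \<Rightarrow> nat \<Rightarrow> 'a::comm_monoid_add"
  assumes b: "bij_betw (\<lambda>h. (l1 h, l2 h)) {..<d} ({..<P} \<times> {..<Q})"
  shows "(\<Sum>h<d. G (l1 h) (l2 h)) = (\<Sum>a<P. \<Sum>b<Q. G a b)"
proof -
  have "(\<Sum>h<d. G (l1 h) (l2 h)) = (\<Sum>h<d. (\<lambda>(a,b). G a b) ((\<lambda>h. (l1 h, l2 h)) h))" by simp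
  also have "\<dots> = (\<Sum>p\<in>{..<P} \<times> {..<Q}. (\<lambda>(a,b). G a b) p)"
    by (rule sum.reindex_bij_betw[OF b])
  also have "\<dots> = (\<Sum>a<P. \<Sum>b<Q. G a b)" by (simp add: sum.cartesian_product)
  finally show ?thesis .
qed

lemma block_sum:
  fixes F :: "nat \<Rightarrow> 'a::comm_monoid_add"
  assumes j: "j < length ms"
  shows "(\<Sum>u<sum_list ms. if inb ms j u then F (u - blk_off ms j) else 0) = (\<Sum>b0<ms!j. F b0)"
proof -
  let ?o = "blk_off ms j"
  have sub: "{?o..<ms!j + ?o} \<subseteq> {..<sum_list ms}" using blk_end_le[OF j] by auto
  have "(\<Sum>u<sum_list ms. if inb ms j u then F (u - ?o) else 0) = (\<Sum>u\<in>{?o..<ms!j + ?o}. F (u - ?o))"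
    by (rule sum.mono_neutral_cong_right[OF _ sub]) (auto simp: inb_def j)
  also have "\<dots> = (\<Sum>u\<in>{0 + ?o..<ms!j + ?o}. F (u - ?o))" by simp
  also have "\<dots> = (\<Sum>b0\<in>{0..<ms!j}. F (b0 + ?o - ?o))" by (rule sum.shift_bounds_nat_ivl)
  also have "\<dots> = (\<Sum>b0<ms!j. F b0)" by (simp add: atLeast0LessThan)
  finally show ?thesis .
qed

lemma split_range:
  fixes F :: "nat \<Rightarrow> 'a::comm_monoid_add"
  assumes "n dvd P"
  shows "(\<Sum>a<P. F a) = (\<Sum>\<alpha><n. \<Sum>t<P div n. F (\<alpha> * (P div n) + t))"
proof -
  have "P = n * (P div n)" using assms by simp
  then have "(\<Sum>a<P. F a) = (\<Sum>a<n * (P div n). F a)" by simp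
  also have "\<dots> = (\<Sum>\<alpha><n. \<Sum>t<P div n. F (\<alpha> * (P div n) + t))" by (rule sum_split_mult)
  finally show ?thesis .
qed

lemma delta_two:
  fixes c e :: nat and y :: complex
  assumes "c < E"
  shows "(\<Sum>t<E. if t = c \<and> t = e then y else 0) = (if e = c then y else 0)"
proof -
  have "(\<Sum>t<E. if t = c \<and> t = e then y else 0) = (\<Sum>t<E. if t = c then (if e = c then y else 0) else 0)"
    by (intro sum.cong) auto
  then show ?thesis using assms by (simp add: sum.delta)
qed


lemma lab_iff: "x \<in> lab ns \<longleftrightarrow> fst x < length ns \<and> fst (snd x) < ns ! fst x \<and> snd (snd x) < ns ! fst x"
  unfolding lab_def by (cases x) auto

lemma sum_if_out: "(\<Sum>x\<in>A. if C then f x else 0) = (if C then (\<Sum>x\<in>A. f x) else 0)"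
  by simp

lemma Bsum:
  assumes y: "y \<in> lab ms" and y': "y' \<in> lab ms" and pos: "\<forall>m\<in>set ms. 0 < m"
    and dv: "\<forall>j<length ms. ms!j dvd Q"
    and e1: "e1 < Q div (ms ! fst y)"
  shows "(\<Sum>b<Q. \<Sum>u<sum_list ms. Apart ms Q y e1 b u * Bpart ms Q y' c2 b u) =
    (if y = y' \<and> e1 = c2 then complex_of_real (1 / sqrt (real (ms ! fst y))) * of_nat (ms ! fst y) else 0)"
proof (cases "fst y = fst y'")
  case False
  have z: "Apart ms Q y e1 b u * Bpart ms Q y' c2 b u = 0" for b u
    using False inb_uniq[of ms "fst y" u "fst y'"] unfolding Apart_def Bpart_def by auto
  have "(\<Sum>b<Q. \<Sum>u<sum_list ms. Apart ms Q y e1 b u * Bpart ms Q y' c2 b u) = 0"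
    by (simp add: z)
  then show ?thesis using False by auto
next
  case True
  obtain j p q where yj: "y = (j,p,q)" by (cases y) auto
  obtain p' q' where yj': "y' = (j,p',q')" using True yj by (cases y') auto
  let ?m = "ms ! j" and ?e = "Q div (ms ! j)" and ?o = "blk_off ms j"
  have jl: "j < length ms" and pq: "p < ?m" "q < ?m" "p' < ?m" "q' < ?m"
    using y y' yj yj' by (auto simp: lab_iff)
  have m0: "0 < ?m" using pos jl by auto
  have dvj: "?m dvd Q" using dv jl by auto
  have e0: "0 < ?e" using e1 yj by simp
  let ?c = "complex_of_real (1 / sqrt (real ?m))"
  define S where "S \<beta> = (\<Sum>b0<?m. cnj (wey ?m p q b0 \<beta>) * wey ?m p' q' b0 \<beta>)" for \<beta>
  have step1: "(\<Sum>u<sum_list ms. Apart ms Q y e1 b u * Bpart ms Q y' c2 b u) =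
      (if b mod ?e = e1 \<and> b mod ?e = c2 then ?c * S (b div ?e) else 0)" for b
  proof -
    have "(\<Sum>u<sum_list ms. Apart ms Q y e1 b u * Bpart ms Q y' c2 b u) =
       (\<Sum>u<sum_list ms. if inb ms j u then (\<lambda>b0. if b mod ?e = e1 \<and> b mod ?e = c2 then
            ?c * (cnj (wey ?m p q b0 (b div ?e)) * wey ?m p' q' b0 (b div ?e)) else 0) (u - ?o) else 0)"
      by (intro sum.cong refl) (auto simp: Apart_def Bpart_def yj yj')
    also have "\<dots> = (\<Sum>b0<?m. if b mod ?e = e1 \<and> b mod ?e = c2 then
            ?c * (cnj (wey ?m p q b0 (b div ?e)) * wey ?m p' q' b0 (b div ?e)) else 0)"
      by (rule block_sum[OF jl])
    also have "\<dots> = (if b mod ?e = e1 \<and> b mod ?e = c2 then ?c * S (b div ?e) else 0)"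
      unfolding sum_if_out S_def sum_distrib_left by (rule refl)
    finally show ?thesis .
  qed
  have "(\<Sum>b<Q. \<Sum>u<sum_list ms. Apart ms Q y e1 b u * Bpart ms Q y' c2 b u) =
      (\<Sum>b<Q. if b mod ?e = e1 \<and> b mod ?e = c2 then ?c * S (b div ?e) else 0)"
    by (simp add: step1)
  also have "\<dots> = (\<Sum>\<beta><?m. \<Sum>t<?e. if (\<beta> * ?e + t) mod ?e = e1 \<and> (\<beta> * ?e + t) mod ?e = c2 then ?c * S ((\<beta> * ?e + t) div ?e) else 0)"
    by (rule split_range[OF dvj])
  also have "\<dots> = (\<Sum>\<beta><?m. \<Sum>t<?e. if t = e1 \<and> t = c2 then ?c * S \<beta> else 0)"
    by (intro sum.cong refl) simp
  also have "\<dots> = (\<Sum>\<beta><?m. if c2 = e1 then ?c * S \<beta> else 0)"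
    using e1 yj by (simp add: delta_two)
  also have "\<dots> = (if c2 = e1 then ?c * (\<Sum>\<beta><?m. S \<beta>) else 0)"
    by (simp add: sum_distrib_left)
  also have "(\<Sum>\<beta><?m. S \<beta>) = (\<Sum>b0<?m. \<Sum>\<beta><?m. cnj (wey ?m p q b0 \<beta>) * wey ?m p' q' b0 \<beta>)"
    unfolding S_def by (rule sum.swap)
  also have "\<dots> = (if p = p' \<and> q = q' then of_nat ?m else 0)"
    by (rule wey_orth[OF m0 pq])
  finally show ?thesis using yj yj' by auto
qed

lemma Asum:
  assumes x: "x \<in> lab ns" and pos: "\<forall>n\<in>set ns. 0 < n"
    and dv: "\<forall>i<length ns. ns!i dvd P"
    and c1: "c1 < P div (ns ! fst x)"
  shows "(\<Sum>a<P. Bpart ns P x e2 a r * Apart ns P x c1 a r0) =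
    (if e2 = c1 \<and> inb ns (fst x) r \<and> r = r0 then complex_of_real (1 / sqrt (real (ns ! fst x))) else 0)"
proof -
  obtain i p q where xi: "x = (i,p,q)" by (cases x) auto
  let ?n = "ns ! i" and ?e = "P div (ns ! i)" and ?o = "blk_off ns i"
  have il: "i < length ns" and pq: "p < ?n" "q < ?n"
    using x xi by (auto simp: lab_iff)
  have n0: "0 < ?n" using pos il by auto
  have dvi: "?n dvd P" using dv il by auto
  let ?c = "complex_of_real (1 / sqrt (real ?n))"
  show ?thesis
  proof (cases "inb ns i r \<and> inb ns i r0")
    case False
    then have z: "Bpart ns P x e2 a r * Apart ns P x c1 a r0 = 0" for a
      unfolding Apart_def Bpart_def xi by auto
    have nn: "\<not> (inb ns (fst x) r \<and> r = r0)" using False xi by auto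
    have "(\<Sum>a<P. Bpart ns P x e2 a r * Apart ns P x c1 a r0) = 0" by (simp add: z)
    then show ?thesis using nn by auto
  next
    case True
    have rl: "r - ?o < ?n" "r0 - ?o < ?n" using True unfolding inb_def by auto
    have "(\<Sum>a<P. Bpart ns P x e2 a r * Apart ns P x c1 a r0) =
       (\<Sum>a<P. if a mod ?e = c1 \<and> a mod ?e = e2 then ?c * (wey ?n p q (r - ?o) (a div ?e) * cnj (wey ?n p q (r0 - ?o) (a div ?e))) else 0)"
      using True by (intro sum.cong refl) (auto simp: Apart_def Bpart_def xi)
    also have "\<dots> = (\<Sum>\<alpha><?n. \<Sum>t<?e. if (\<alpha> * ?e + t) mod ?e = c1 \<and> (\<alpha> * ?e + t) mod ?e = e2 then
         ?c * (wey ?n p q (r - ?o) ((\<alpha> * ?e + t) div ?e) * cnj (wey ?n p q (r0 - ?o) ((\<alpha> * ?e + t) div ?e))) else 0)"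
      by (rule split_range[OF dvi])
    also have "\<dots> = (\<Sum>\<alpha><?n. \<Sum>t<?e. if t = c1 \<and> t = e2 then
         ?c * (wey ?n p q (r - ?o) \<alpha> * cnj (wey ?n p q (r0 - ?o) \<alpha>)) else 0)"
      by (intro sum.cong refl) simp
    also have "\<dots> = (\<Sum>\<alpha><?n. if e2 = c1 then ?c * (wey ?n p q (r - ?o) \<alpha> * cnj (wey ?n p q (r0 - ?o) \<alpha>)) else 0)"
      using c1 xi by (simp add: delta_two)
    also have "\<dots> = (if e2 = c1 then ?c * (\<Sum>\<alpha><?n. wey ?n p q (r - ?o) \<alpha> * cnj (wey ?n p q (r0 - ?o) \<alpha>)) else 0)"
      unfolding sum_if_out sum_distrib_left by (rule refl)
    also have "(\<Sum>\<alpha><?n. wey ?n p q (r - ?o) \<alpha> * cnj (wey ?n p q (r0 - ?o) \<alpha>)) = (if r - ?o = r0 - ?o then 1 else 0)"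
      by (rule wey_row[OF n0 rl])
    also have "(r - ?o = r0 - ?o) \<longleftrightarrow> r = r0" using True unfolding inb_def by auto
    finally show ?thesis using True xi by auto
  qed
qed


lemma KI_sum:
  "(\<Sum>\<kappa>\<in>KI ns ms f P Q. F \<kappa>) =
   (\<Sum>x\<in>lab ns. \<Sum>c1<P div (ns ! fst x). \<Sum>c2<Q div (ms ! fst (f x)). F (x,c1,c2))"
proof -
  have "(\<Sum>x\<in>lab ns. \<Sum>c1<P div (ns ! fst x). \<Sum>c2<Q div (ms ! fst (f x)). F (x,c1,c2)) =
     (\<Sum>x\<in>lab ns. \<Sum>c\<in>{..<P div (ns ! fst x)} \<times> {..<Q div (ms ! fst (f x))}. F (x, c))"
    by (simp add: sum.cartesian_product split_beta)
  also have "\<dots> = (\<Sum>(x,c)\<in>KI ns ms f P Q. F (x,c))"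
    unfolding KI_def by (rule sum.Sigma) (auto simp: finite_lab)
  finally show ?thesis by (simp add: split_beta)
qed

lemma lab_sum:
  "(\<Sum>x\<in>lab ns. F x) = (\<Sum>i<length ns. \<Sum>p<ns!i. \<Sum>q<ns!i. F (i,p,q))"
proof -
  have "(\<Sum>i<length ns. \<Sum>p<ns!i. \<Sum>q<ns!i. F (i,p,q)) = (\<Sum>i<length ns. \<Sum>pq\<in>{..<ns!i} \<times> {..<ns!i}. F (i,pq))"
    by (simp add: sum.cartesian_product split_beta)
  also have "\<dots> = (\<Sum>(i,pq)\<in>lab ns. F (i,pq))"
    unfolding lab_def by (rule sum.Sigma) auto
  finally show ?thesis by (simp add: split_beta)
qed

lemma Bnorm:
  assumes y: "y \<in> lab ms" and pos: "\<forall>m\<in>set ms. 0 < m" and dv: "\<forall>j<length ms. ms!j dvd Q"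
    and b: "b < Q" "b' < Q"
  shows "(\<Sum>c<Q div (ms ! fst y). \<Sum>u<sum_list ms. cnj (Bpart ms Q y c b' u) * Bpart ms Q y c b u) =
     (if b = b' then 1 else 0)"
proof -
  obtain j p q where yj: "y = (j,p,q)" by (cases y) auto
  let ?m = "ms ! j" and ?e = "Q div (ms ! j)"
  have jl: "j < length ms" and pq: "p < ?m" "q < ?m" using y yj by (auto simp: lab_iff)
  have m0: "0 < ?m" using pos jl by auto
  have dvj: "?m dvd Q" using dv jl by auto
  have e0: "0 < ?e" using b dvj m0 by (metis dvd_div_eq_0_iff less_nat_zero_code neq0_conv)
  have Qe: "Q = ?m * ?e" using dvj by simp
  have bd: "b div ?e < ?m" "b' div ?e < ?m" using b Qe e0 by (auto simp: div_less_iff_less_mult mult.commute)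
  have "(\<Sum>c<?e. \<Sum>u<sum_list ms. cnj (Bpart ms Q y c b' u) * Bpart ms Q y c b u) =
     (\<Sum>c<?e. if c = b mod ?e \<and> c = b' mod ?e then
        (\<Sum>u<sum_list ms. if inb ms j u then (\<lambda>b0. cnj (wey ?m p q b0 (b' div ?e)) * wey ?m p q b0 (b div ?e)) (u - blk_off ms j) else 0) else 0)"
  proof -
    have pt: "cnj (Bpart ms Q y c b' u) * Bpart ms Q y c b u = (if c = b mod ?e \<and> c = b' mod ?e then
        (if inb ms j u then (\<lambda>b0. cnj (wey ?m p q b0 (b' div ?e)) * wey ?m p q b0 (b div ?e)) (u - blk_off ms j) else 0) else 0)" for c u
      by (auto simp: Bpart_def yj)
    show ?thesis unfolding pt sum_if_out by (rule refl)
  qed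
  also have "\<dots> = (\<Sum>c<?e. if c = b mod ?e \<and> c = b' mod ?e then
        (\<Sum>b0<?m. cnj (wey ?m p q b0 (b' div ?e)) * wey ?m p q b0 (b div ?e)) else 0)"
    using block_sum[OF jl, of "\<lambda>b0. cnj (wey ?m p q b0 (b' div ?e)) * wey ?m p q b0 (b div ?e)"] by (simp only:)
  also have "\<dots> = (\<Sum>c<?e. if c = b mod ?e \<and> c = b' mod ?e then (if b' div ?e = b div ?e then 1 else 0) else 0)"
    using wey_col[OF m0 bd(2) bd(1) pq(1), of q] by (simp only:)
  also have "\<dots> = (if b' mod ?e = b mod ?e then (if b' div ?e = b div ?e then 1 else 0) else 0)"
    using e0 by (simp add: delta_two)
  also have "\<dots> = (if b = b' then 1 else 0)"
    by (metis div_mult_mod_eq)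
  finally show ?thesis using yj by simp
qed

lemma sqrt_inv_sq: "0 < n \<Longrightarrow> complex_of_real (1 / sqrt (real n)) * complex_of_real (1 / sqrt (real n)) * of_nat n = 1"
proof -
  assume n: "0 < n"
  have "(1 / sqrt (real n)) * (1 / sqrt (real n)) * real n = 1"
    using n by (simp add: field_simps)
  have "complex_of_real (1 / sqrt (real n)) * complex_of_real (1 / sqrt (real n)) * of_nat n =
     complex_of_real ((1 / sqrt (real n)) * (1 / sqrt (real n)) * real n)"
    by (simp only: of_real_mult of_real_of_nat_eq)
  also have "\<dots> = 1" using \<open>(1 / sqrt (real n)) * (1 / sqrt (real n)) * real n = 1\<close> by simp
  finally show ?thesis .
qed

lemma Anorm:
  assumes pos: "\<forall>n\<in>set ns. 0 < n" and dv: "\<forall>i<length ns. ns!i dvd P"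
    and a: "a < P" "a' < P" and r: "r0 < sum_list ns" "r0' < sum_list ns"
  shows "(\<Sum>x\<in>lab ns. \<Sum>c1<P div (ns ! fst x). cnj (Apart ns P x c1 a' r0') * Apart ns P x c1 a r0) =
     (if a = a' \<and> r0 = r0' then 1 else 0)"
proof -
  let ?T = "\<lambda>i. (\<Sum>p<ns!i. \<Sum>q<ns!i. \<Sum>c1<P div (ns ! i). cnj (Apart ns P (i,p,q) c1 a' r0') * Apart ns P (i,p,q) c1 a r0)"
  define i0 where "i0 = blk ns r0"
  have i0: "inb ns i0 r0" unfolding i0_def by (rule inb_blk[OF r(1)])
  have i0l: "i0 < length ns" using i0 by (simp add: inb_def)
  have Tz: "?T i = 0" if "i \<noteq> i0" for i
  proof -
    have "\<not> inb ns i r0" using that i0 inb_uniq by blast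
    then show ?thesis by (simp add: Apart_def)
  qed
  have "(\<Sum>x\<in>lab ns. \<Sum>c1<P div (ns ! fst x). cnj (Apart ns P x c1 a' r0') * Apart ns P x c1 a r0) =
      (\<Sum>i<length ns. ?T i)"
    by (simp add: lab_sum)
  also have "\<dots> = (\<Sum>i<length ns. if i = i0 then ?T i else 0)"
    by (intro sum.cong refl) (simp add: Tz)
  also have "\<dots> = ?T i0" using i0l by (simp add: sum.delta)
  also have "?T i0 = (if a = a' \<and> r0 = r0' then 1 else 0)"
  proof (cases "inb ns i0 r0'")
    case False
    then have "r0 \<noteq> r0'" using i0 by auto
    moreover have "?T i0 = 0" using False by (simp add: Apart_def)
    ultimately show ?thesis by simp
  next
    case True
    let ?n = "ns ! i0" and ?e = "P div (ns ! i0)" and ?o = "blk_off ns i0"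
    let ?c = "complex_of_real (1 / sqrt (real ?n))"
    have n0: "0 < ?n" using pos i0l by auto
    have dvi: "?n dvd P" using dv i0l by auto
    have e0: "0 < ?e" using a dvi n0 by (metis dvd_div_eq_0_iff less_nat_zero_code neq0_conv)
    have Pe: "P = ?n * ?e" using dvi by simp
    have ad: "a div ?e < ?n" "a' div ?e < ?n" using a Pe e0 by (auto simp: div_less_iff_less_mult mult.commute)
    have rl: "r0 - ?o < ?n" "r0' - ?o < ?n" using i0 True unfolding inb_def by auto
    have pt: "cnj (Apart ns P (i0,p,q) c1 a' r0') * Apart ns P (i0,p,q) c1 a r0 =
       (if c1 = a mod ?e \<and> c1 = a' mod ?e then ?c * ?c * (wey ?n p q (r0' - ?o) (a' div ?e) * cnj (wey ?n p q (r0 - ?o) (a div ?e))) else 0)" for p q c1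
      using i0 True by (auto simp: Apart_def)
    have "?T i0 = (\<Sum>p<?n. \<Sum>q<?n. \<Sum>c1<?e. if c1 = a mod ?e \<and> c1 = a' mod ?e then ?c * ?c * (wey ?n p q (r0' - ?o) (a' div ?e) * cnj (wey ?n p q (r0 - ?o) (a div ?e))) else 0)"
      by (simp only: pt)
    also have "\<dots> = (\<Sum>c1<?e. \<Sum>p<?n. \<Sum>q<?n. if c1 = a mod ?e \<and> c1 = a' mod ?e then ?c * ?c * (wey ?n p q (r0' - ?o) (a' div ?e) * cnj (wey ?n p q (r0 - ?o) (a div ?e))) else 0)"
    proof -
      have "(\<Sum>p<?n. \<Sum>q<?n. \<Sum>c1<?e. if c1 = a mod ?e \<and> c1 = a' mod ?e then ?c * ?c * (wey ?n p q (r0' - ?o) (a' div ?e) * cnj (wey ?n p q (r0 - ?o) (a div ?e))) else 0)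
         = (\<Sum>p<?n. \<Sum>c1<?e. \<Sum>q<?n. if c1 = a mod ?e \<and> c1 = a' mod ?e then ?c * ?c * (wey ?n p q (r0' - ?o) (a' div ?e) * cnj (wey ?n p q (r0 - ?o) (a div ?e))) else 0)"
        by (rule sum.cong[OF refl], rule sum.swap)
      also have "\<dots> = (\<Sum>c1<?e. \<Sum>p<?n. \<Sum>q<?n. if c1 = a mod ?e \<and> c1 = a' mod ?e then ?c * ?c * (wey ?n p q (r0' - ?o) (a' div ?e) * cnj (wey ?n p q (r0 - ?o) (a div ?e))) else 0)"
        by (rule sum.swap)
      finally show ?thesis .
    qed
    also have "\<dots> = (\<Sum>c1<?e. if c1 = a mod ?e \<and> c1 = a' mod ?e then ?c * ?c * (\<Sum>p<?n. \<Sum>q<?n. wey ?n p q (r0' - ?o) (a' div ?e) * cnj (wey ?n p q (r0 - ?o) (a div ?e))) else 0)"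
      unfolding sum_if_out sum_distrib_left by (rule refl)
    also have "(\<Sum>p<?n. \<Sum>q<?n. wey ?n p q (r0' - ?o) (a' div ?e) * cnj (wey ?n p q (r0 - ?o) (a div ?e))) =
        (if r0' - ?o = r0 - ?o \<and> a' div ?e = a div ?e then of_nat ?n else 0)"
      by (rule wey_compl[OF n0 rl(2) ad(2) rl(1) ad(1)])
    also have "(\<Sum>c1<?e. if c1 = a mod ?e \<and> c1 = a' mod ?e then ?c * ?c * (if r0' - ?o = r0 - ?o \<and> a' div ?e = a div ?e then of_nat ?n else 0) else 0)
        = (if a' mod ?e = a mod ?e then ?c * ?c * (if r0' - ?o = r0 - ?o \<and> a' div ?e = a div ?e then of_nat ?n else 0) else 0)"
      using e0 by (simp add: delta_two)
    also have "\<dots> = (if a = a' \<and> r0 = r0' then 1 else 0)"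
    proof -
      have "(a' mod ?e = a mod ?e \<and> a' div ?e = a div ?e) \<longleftrightarrow> a = a'" by (metis div_mult_mod_eq)
      moreover have "(r0' - ?o = r0 - ?o) \<longleftrightarrow> r0 = r0'" using i0 True unfolding inb_def by auto
      ultimately show ?thesis using sqrt_inv_sq[OF n0] by auto
    qed
    finally show ?thesis .
  qed
  finally show ?thesis .
qed

lemma lay_bounds:
  assumes lay: "bij_betw (\<lambda>h. (l1 h, l2 h)) {..<d} ({..<P} \<times> {..<Q})" and h: "h < d"
  shows "l1 h < P" "l2 h < Q"
  using bij_betw_apply[OF lay, of h] h by auto

lemma lay_inj:
  assumes lay: "bij_betw (\<lambda>h. (l1 h, l2 h)) {..<d} ({..<P} \<times> {..<Q})" and h: "h < d" "h' < d"
    and e: "l1 h = l1 h'" "l2 h = l2 h'"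
  shows "h = h'"
  using bij_betw_imp_inj_on[OF lay] h e by (auto dest: inj_onD)

lemma chanK_TP:
  assumes posn: "\<forall>n\<in>set ns. 0 < n" and posm: "\<forall>m\<in>set ms. 0 < m"
    and dvn: "\<forall>i<length ns. ns!i dvd P" and dvm: "\<forall>j<length ms. ms!j dvd Q"
    and fmap: "\<forall>x\<in>lab ns. f x \<in> lab ms"
    and lay: "bij_betw (\<lambda>h. (l1 h, l2 h)) {..<d} ({..<P} \<times> {..<Q})"
    and s: "s < sum_list ns * d" and t: "t < sum_list ns * d"
  shows "(\<Sum>\<kappa>\<in>KI ns ms f P Q. \<Sum>u<sum_list ms. cnj (KC ns ms f d P Q l1 l2 \<kappa> u t) * KC ns ms f d P Q l1 l2 \<kappa> u s)
     = (if s = t then 1 else 0)"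
proof -
  have d: "0 < d" using s by (metis mult_0_right not_gr_zero not_less_zero)
  define r0 h r0' h' where "r0 = s div d" and "h = s mod d" and "r0' = t div d" and "h' = t mod d"
  have hd: "h < d" "h' < d" using d by (auto simp: h_def h'_def)
  have r: "r0 < sum_list ns" "r0' < sum_list ns" using s t d by (auto simp: r0_def r0'_def div_less_iff_less_mult)
  have lb: "l1 h < P" "l2 h < Q" "l1 h' < P" "l2 h' < Q" using lay_bounds[OF lay] hd by auto
  let ?A = "\<lambda>x c1. cnj (Apart ns P x c1 (l1 h') r0') * Apart ns P x c1 (l1 h) r0"
  let ?B = "\<lambda>x c2 u. cnj (Bpart ms Q (f x) c2 (l2 h') u) * Bpart ms Q (f x) c2 (l2 h) u"
  have pt: "cnj (KC ns ms f d P Q l1 l2 (x,c1,c2) u t) * KC ns ms f d P Q l1 l2 (x,c1,c2) u s = ?A x c1 * ?B x c2 u" for x c1 c2 u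
    by (simp add: KC_def r0_def h_def r0'_def h'_def mult_ac)
  have "(\<Sum>\<kappa>\<in>KI ns ms f P Q. \<Sum>u<sum_list ms. cnj (KC ns ms f d P Q l1 l2 \<kappa> u t) * KC ns ms f d P Q l1 l2 \<kappa> u s)
     = (\<Sum>x\<in>lab ns. \<Sum>c1<P div (ns ! fst x). \<Sum>c2<Q div (ms ! fst (f x)). \<Sum>u<sum_list ms. ?A x c1 * ?B x c2 u)"
    unfolding KI_sum pt by (rule refl)
  also have "\<dots> = (\<Sum>x\<in>lab ns. \<Sum>c1<P div (ns ! fst x). ?A x c1 * (\<Sum>c2<Q div (ms ! fst (f x)). \<Sum>u<sum_list ms. ?B x c2 u))"
    by (simp add: sum_distrib_left)
  also have "\<dots> = (\<Sum>x\<in>lab ns. \<Sum>c1<P div (ns ! fst x). ?A x c1 * (if l2 h = l2 h' then 1 else 0))"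
  proof (rule sum.cong[OF refl], rule sum.cong[OF refl])
    fix x c1 assume x: "x \<in> lab ns"
    have "(\<Sum>c2<Q div (ms ! fst (f x)). \<Sum>u<sum_list ms. ?B x c2 u) = (if l2 h = l2 h' then 1 else 0)"
      by (rule Bnorm[OF fmap[rule_format, OF x] posm dvm lb(2) lb(4)])
    then show "?A x c1 * (\<Sum>c2<Q div (ms ! fst (f x)). \<Sum>u<sum_list ms. ?B x c2 u) = ?A x c1 * (if l2 h = l2 h' then 1 else 0)"
      by simp
  qed
  also have "\<dots> = (if l2 h = l2 h' then 1 else 0) * (\<Sum>x\<in>lab ns. \<Sum>c1<P div (ns ! fst x). ?A x c1)"
    by (simp add: sum_distrib_left mult.commute)
  also have "(\<Sum>x\<in>lab ns. \<Sum>c1<P div (ns ! fst x). ?A x c1) = (if l1 h = l1 h' \<and> r0 = r0' then 1 else 0)"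
    by (rule Anorm[OF posn dvn lb(1) lb(3) r])
  also have "(if l2 h = l2 h' then 1 else 0) * (if l1 h = l1 h' \<and> r0 = r0' then 1 else 0) = (if s = t then (1::complex) else 0)"
  proof -
    have "(l2 h = l2 h' \<and> l1 h = l1 h' \<and> r0 = r0') \<longleftrightarrow> s = t"
    proof
      assume "l2 h = l2 h' \<and> l1 h = l1 h' \<and> r0 = r0'"
      then have "h = h'" "r0 = r0'" using lay_inj[OF lay hd] by auto
      then show "s = t" unfolding r0_def h_def r0'_def h'_def by (metis div_mult_mod_eq)
    qed (simp add: r0_def h_def r0'_def h'_def)
    then show ?thesis by auto
  qed
  finally show ?thesis .
qed


lemma sesq_abstract:
  fixes A :: "'k \<Rightarrow> nat \<Rightarrow> nat \<Rightarrow> complex" and Z :: "nat \<Rightarrow> nat \<Rightarrow> complex"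
  shows "(\<Sum>w<M. \<Sum>w'<M. v1 w * (\<Sum>\<kappa>\<in>I. \<Sum>\<sigma><N. \<Sum>\<tau><N. A \<kappa> w \<sigma> * Z \<sigma> \<tau> * cnj (A \<kappa> w' \<tau>)) * v2 w') =
    (\<Sum>\<kappa>\<in>I. \<Sum>\<sigma><N. \<Sum>\<tau><N. (\<Sum>w<M. v1 w * A \<kappa> w \<sigma>) * Z \<sigma> \<tau> * (\<Sum>w'<M. cnj (A \<kappa> w' \<tau>) * v2 w'))"
proof -
  have "(\<Sum>w<M. \<Sum>w'<M. v1 w * (\<Sum>\<kappa>\<in>I. \<Sum>\<sigma><N. \<Sum>\<tau><N. A \<kappa> w \<sigma> * Z \<sigma> \<tau> * cnj (A \<kappa> w' \<tau>)) * v2 w') =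
     (\<Sum>w<M. \<Sum>w'<M. \<Sum>\<kappa>\<in>I. \<Sum>\<sigma><N. \<Sum>\<tau><N. v1 w * A \<kappa> w \<sigma> * Z \<sigma> \<tau> * cnj (A \<kappa> w' \<tau>) * v2 w')"
    by (simp add: sum_distrib_left sum_distrib_right mult_ac)
  also have "\<dots> = (\<Sum>\<kappa>\<in>I. \<Sum>\<sigma><N. \<Sum>\<tau><N. \<Sum>w<M. \<Sum>w'<M. v1 w * A \<kappa> w \<sigma> * Z \<sigma> \<tau> * cnj (A \<kappa> w' \<tau>) * v2 w')"
    by (rule sum5_perm)
  also have "\<dots> = (\<Sum>\<kappa>\<in>I. \<Sum>\<sigma><N. \<Sum>\<tau><N. (\<Sum>w<M. v1 w * A \<kappa> w \<sigma>) * Z \<sigma> \<tau> * (\<Sum>w'<M. cnj (A \<kappa> w' \<tau>) * v2 w'))"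
    by (simp add: sum_distrib_left sum_distrib_right mult_ac)
  finally show ?thesis .
qed

lemma L_formula:
  assumes d: "0 < d"
  shows "(\<Sum>w<B*d. Kp w * ktil d K \<kappa> w \<sigma>) = (\<Sum>u<B. Kp (u*d + \<sigma> mod d) * K \<kappa> u (\<sigma> div d))"
proof -
  have "(\<Sum>w<B*d. Kp w * ktil d K \<kappa> w \<sigma>) = (\<Sum>u<B. \<Sum>h<d. Kp (u*d+h) * ktil d K \<kappa> (u*d+h) \<sigma>)"
    by (rule sum_split_mult)
  also have "\<dots> = (\<Sum>u<B. \<Sum>h<d. if h = \<sigma> mod d then Kp (u*d+h) * K \<kappa> u (\<sigma> div d) else 0)"
    by (intro sum.cong refl) (auto simp: ktil_def)
  also have "\<dots> = (\<Sum>u<B. Kp (u*d + \<sigma> mod d) * K \<kappa> u (\<sigma> div d))"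
    using d by (simp add: sum.delta)
  finally show ?thesis .
qed

lemma kron_sum:
  fixes Lf Lg :: "nat \<Rightarrow> complex"
  assumes d: "0 < d" and \<rho>: "\<rho> \<in> carrier_mat A A"
  shows "(\<Sum>\<sigma><A*d*d. \<Sum>\<tau><A*d*d. Lf \<sigma> * kron \<rho> (maxent d) $$ (\<sigma>,\<tau>) * Lg \<tau>) =
    (1 / of_nat d) * (\<Sum>r1<A. \<Sum>r1'<A. \<rho> $$ (r1,r1') * (\<Sum>h<d. Lf ((r1*d+h)*d+h)) * (\<Sum>h'<d. Lg ((r1'*d+h')*d+h')))"
proof -
  let ?X = "kron \<rho> (maxent d)"
  have "(\<Sum>\<sigma><A*d*d. \<Sum>\<tau><A*d*d. Lf \<sigma> * ?X $$ (\<sigma>,\<tau>) * Lg \<tau>) =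
     (\<Sum>a<A*d. \<Sum>h2<d. \<Sum>b<A*d. \<Sum>t2<d. Lf (a*d+h2) * ?X $$ (a*d+h2, b*d+t2) * Lg (b*d+t2))"
    by (simp add: sum_split_mult)
  also have "\<dots> = (\<Sum>a<A*d. \<Sum>h2<d. \<Sum>b<A*d. \<Sum>t2<d.
      if h2 = a mod d \<and> t2 = b mod d then Lf (a*d+h2) * \<rho> $$ (a div d, b div d) * (1 / of_nat d) * Lg (b*d+t2) else 0)"
    by (intro sum.cong refl) (auto simp: kron_maxent_entry[OF \<rho>])
  also have "\<dots> = (\<Sum>a<A*d. \<Sum>b<A*d. Lf (a*d + a mod d) * \<rho> $$ (a div d, b div d) * (1 / of_nat d) * Lg (b*d + b mod d))"
  proof (rule sum.cong[OF refl])
    fix a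
    have "(\<Sum>h2<d. \<Sum>b<A*d. \<Sum>t2<d.
      if h2 = a mod d \<and> t2 = b mod d then Lf (a*d+h2) * \<rho> $$ (a div d, b div d) * (1 / of_nat d) * Lg (b*d+t2) else 0) =
      (\<Sum>h2<d. if h2 = a mod d then (\<Sum>b<A*d. \<Sum>t2<d.
      if t2 = b mod d then Lf (a*d+h2) * \<rho> $$ (a div d, b div d) * (1 / of_nat d) * Lg (b*d+t2) else 0) else 0)"
      by (intro sum.cong refl) auto
    also have "\<dots> = (\<Sum>b<A*d. \<Sum>t2<d.
      if t2 = b mod d then Lf (a*d + a mod d) * \<rho> $$ (a div d, b div d) * (1 / of_nat d) * Lg (b*d+t2) else 0)"
      using d by (simp add: sum.delta)
    also have "\<dots> = (\<Sum>b<A*d. Lf (a*d + a mod d) * \<rho> $$ (a div d, b div d) * (1 / of_nat d) * Lg (b*d + b mod d))"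
      using d by (simp add: sum.delta)
    finally show "(\<Sum>h2<d. \<Sum>b<A*d. \<Sum>t2<d.
      if h2 = a mod d \<and> t2 = b mod d then Lf (a*d+h2) * \<rho> $$ (a div d, b div d) * (1 / of_nat d) * Lg (b*d+t2) else 0) =
      (\<Sum>b<A*d. Lf (a*d + a mod d) * \<rho> $$ (a div d, b div d) * (1 / of_nat d) * Lg (b*d + b mod d))" .
  qed
  also have "\<dots> = (\<Sum>r1<A. \<Sum>h1<d. \<Sum>r1'<A. \<Sum>h1'<d. Lf ((r1*d+h1)*d + h1) * \<rho> $$ (r1, r1') * (1 / of_nat d) * Lg ((r1'*d+h1')*d + h1'))"
    using d by (simp add: sum_split_mult)
  also have "\<dots> = (\<Sum>r1<A. \<Sum>r1'<A. \<Sum>h1<d. \<Sum>h1'<d. Lf ((r1*d+h1)*d + h1) * \<rho> $$ (r1, r1') * (1 / of_nat d) * Lg ((r1'*d+h1')*d + h1'))"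
    by (rule sum.cong[OF refl], rule sum.swap)
  also have "\<dots> = (1 / of_nat d) * (\<Sum>r1<A. \<Sum>r1'<A. \<rho> $$ (r1,r1') * (\<Sum>h<d. Lf ((r1*d+h)*d+h)) * (\<Sum>h'<d. Lg ((r1'*d+h')*d+h')))"
    by (simp add: sum_distrib_left sum_distrib_right mult_ac)
  finally show ?thesis .
qed


definition gam :: "nat list \<Rightarrow> nat list \<Rightarrow> (nat\<times>nat\<times>nat \<Rightarrow> nat\<times>nat\<times>nat) \<Rightarrow> nat\<times>nat\<times>nat \<Rightarrow> complex" where
  "gam ns ms f x = complex_of_real (1 / sqrt (real (ms ! fst (f x)))) * of_nat (ms ! fst (f x)) *
      complex_of_real (1 / sqrt (real (ns ! fst x)))"

lemma KI_iff: "(x,c1,c2) \<in> KI ns ms f P Q \<longleftrightarrow> x \<in> lab ns \<and> c1 < P div (ns ! fst x) \<and> c2 < Q div (ms ! fst (f x))"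
  unfolding KI_def by auto

lemma core:
  assumes posn: "\<forall>n\<in>set ns. 0 < n" and posm: "\<forall>m\<in>set ms. 0 < m"
    and dvn: "\<forall>i<length ns. ns!i dvd P" and dvm: "\<forall>j<length ms. ms!j dvd Q"
    and fmap: "\<forall>x\<in>lab ns. f x \<in> lab ms" and ginv: "\<forall>x\<in>lab ns. g (f x) = x"
    and lay: "bij_betw (\<lambda>h. (l1 h, l2 h)) {..<d} ({..<P} \<times> {..<Q})" and d: "0 < d"
    and \<kappa>: "(x,c1,c2) \<in> KI ns ms f P Q" and \<kappa>': "(y,e1,e2) \<in> KI ms ns g Q P"
  shows "(\<Sum>u<sum_list ms. \<Sum>h<d. KC ms ns g d Q P l2 l1 (y,e1,e2) r (u*d+h) * KC ns ms f d P Q l1 l2 (x,c1,c2) u (r0*d+h))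
    = (if y = f x \<and> e1 = c2 \<and> e2 = c1 \<and> inb ns (fst x) r \<and> r = r0 then gam ns ms f x else 0)"
proof -
  have x: "x \<in> lab ns" and c1: "c1 < P div (ns ! fst x)" using \<kappa> by (auto simp: KI_iff)
  have y: "y \<in> lab ms" and e1: "e1 < Q div (ms ! fst y)" using \<kappa>' by (auto simp: KI_iff)
  let ?F = "\<lambda>a. Bpart ns P (g y) e2 a r * Apart ns P x c1 a r0"
  let ?G = "\<lambda>b u. Apart ms Q y e1 b u * Bpart ms Q (f x) c2 b u"
  have pt: "KC ms ns g d Q P l2 l1 (y,e1,e2) r (u*d+h) * KC ns ms f d P Q l1 l2 (x,c1,c2) u (r0*d+h) =
      ?F (l1 h) * ?G (l2 h) u" if "h < d" for u h
    using that by (simp add: KC_def mult_ac)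
  have "(\<Sum>u<sum_list ms. \<Sum>h<d. KC ms ns g d Q P l2 l1 (y,e1,e2) r (u*d+h) * KC ns ms f d P Q l1 l2 (x,c1,c2) u (r0*d+h))
      = (\<Sum>u<sum_list ms. \<Sum>h<d. ?F (l1 h) * ?G (l2 h) u)"
    by (intro sum.cong refl) (simp add: pt)
  also have "\<dots> = (\<Sum>h<d. \<Sum>u<sum_list ms. ?F (l1 h) * ?G (l2 h) u)" by (rule sum.swap)
  also have "\<dots> = (\<Sum>h<d. ?F (l1 h) * (\<Sum>u<sum_list ms. ?G (l2 h) u))" by (simp add: sum_distrib_left)
  also have "\<dots> = (\<Sum>a<P. \<Sum>b<Q. ?F a * (\<Sum>u<sum_list ms. ?G b u))"
    by (rule layout_sum[OF lay, where G="\<lambda>a b. ?F a * (\<Sum>u<sum_list ms. ?G b u)"])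
  also have "\<dots> = (\<Sum>a<P. ?F a) * (\<Sum>b<Q. \<Sum>u<sum_list ms. ?G b u)"
    by (rule sum_product[symmetric])
  also have "(\<Sum>b<Q. \<Sum>u<sum_list ms. ?G b u) =
      (if y = f x \<and> e1 = c2 then complex_of_real (1 / sqrt (real (ms ! fst y))) * of_nat (ms ! fst y) else 0)"
    by (rule Bsum[OF y fmap[rule_format, OF x] posm dvm e1])
  finally have eq: "(\<Sum>u<sum_list ms. \<Sum>h<d. KC ms ns g d Q P l2 l1 (y,e1,e2) r (u*d+h) * KC ns ms f d P Q l1 l2 (x,c1,c2) u (r0*d+h))
      = (\<Sum>a<P. ?F a) * (if y = f x \<and> e1 = c2 then complex_of_real (1 / sqrt (real (ms ! fst y))) * of_nat (ms ! fst y) else 0)" .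
  show ?thesis
  proof (cases "y = f x")
    case True
    then have gy: "g y = x" using ginv x by simp
    have "(\<Sum>a<P. ?F a) = (if e2 = c1 \<and> inb ns (fst x) r \<and> r = r0 then complex_of_real (1 / sqrt (real (ns ! fst x))) else 0)"
      unfolding gy by (rule Asum[OF x posn dvn c1])
    then show ?thesis using eq True by (auto simp: gam_def mult_ac)
  next
    case False
    then show ?thesis using eq by simp
  qed
qed

lemma gam_val:
  assumes x: "x \<in> lab ns" and fx: "f x \<in> lab ms"
    and posn: "\<forall>n\<in>set ns. 0 < n" and posm: "\<forall>m\<in>set ms. 0 < m"
    and dvn: "\<forall>i<length ns. ns!i dvd P" and dvm: "\<forall>j<length ms. ms!j dvd Q"
  shows "of_nat (P div ns ! fst x) * of_nat (Q div ms ! fst (f x)) * (gam ns ms f x * cnj (gam ns ms f x)) =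
     (of_nat (P*Q) :: complex) / of_nat (ns ! fst x * ns ! fst x)"
proof -
  let ?n = "ns ! fst x" and ?m = "ms ! fst (f x)"
  have n0: "0 < ?n" using x posn by (auto simp: lab_iff)
  have m0: "0 < ?m" using fx posm by (auto simp: lab_iff)
  have dn: "?n dvd P" using x dvn by (auto simp: lab_iff)
  have dm: "?m dvd Q" using fx dvm by (auto simp: lab_iff)
  define gr where "gr = (1 / sqrt (real ?m)) * real ?m * (1 / sqrt (real ?n))"
  have g: "gam ns ms f x = complex_of_real gr" unfolding gam_def gr_def by simp
  have gr2: "gr * gr = real ?m / real ?n"
    unfolding gr_def using n0 m0 by (simp add: field_simps)
  have Pn: "real (P div ?n) * real ?n = real P" using dn by (metis dvd_div_mult_self of_nat_mult)
  have Qm: "real (Q div ?m) * real ?m = real Q" using dm by (metis dvd_div_mult_self of_nat_mult)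
  have "real (P div ?n) * real (Q div ?m) * (gr * gr) = real (P*Q) / real (?n * ?n)"
    unfolding gr2 using n0 m0 Pn Qm by (simp add: field_simps)
  then have "complex_of_real (real (P div ?n) * real (Q div ?m) * (gr * gr)) = complex_of_real (real (P*Q) / real (?n * ?n))"
    by simp
  then show ?thesis unfolding g by simp
qed

lemma rho_collapse:
  fixes \<rho> :: "complex mat"
  assumes r: "r < A" "r' < A"
  shows "(\<Sum>r1<A. \<Sum>r1'<A. \<rho> $$ (r1,r1') * (if B \<and> C r \<and> r = r1 then \<gamma> else 0) * cnj (if B \<and> C r' \<and> r' = r1' then \<gamma> else 0)) =
     (if B \<and> C r \<and> C r' then \<rho> $$ (r,r') * \<gamma> * cnj \<gamma> else 0)"
proof -
  have "(\<Sum>r1<A. \<Sum>r1'<A. \<rho> $$ (r1,r1') * (if B \<and> C r \<and> r = r1 then \<gamma> else 0) * cnj (if B \<and> C r' \<and> r' = r1' then \<gamma> else 0)) =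
     (\<Sum>r1<A. if r1 = r then (\<Sum>r1'<A. if r1' = r' then (if B \<and> C r \<and> C r' then \<rho> $$ (r1,r1') * \<gamma> * cnj \<gamma> else 0) else 0) else 0)"
  proof -
    have pt: "\<rho> $$ (r1,r1') * (if B \<and> C r \<and> r = r1 then \<gamma> else 0) * cnj (if B \<and> C r' \<and> r' = r1' then \<gamma> else 0) =
      (if r1 = r then (if r1' = r' then (if B \<and> C r \<and> C r' then \<rho> $$ (r1,r1') * \<gamma> * cnj \<gamma> else 0) else 0) else 0)" for r1 r1'
      by auto
    show ?thesis unfolding pt sum_if_out by (rule refl)
  qed
  also have "\<dots> = (if B \<and> C r \<and> C r' then \<rho> $$ (r,r') * \<gamma> * cnj \<gamma> else 0)"
    using r by (simp add: sum.delta)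
  finally show ?thesis .
qed


lemma final_count:
  assumes posn: "\<forall>n\<in>set ns. 0 < n" and posm: "\<forall>m\<in>set ms. 0 < m"
    and dvn: "\<forall>i<length ns. ns!i dvd P" and dvm: "\<forall>j<length ms. ms!j dvd Q"
    and fmap: "\<forall>x\<in>lab ns. f x \<in> lab ms" and dPQ: "d = P*Q" and d: "0 < d"
    and rho: "\<rho> \<in> fdalg ns" and r: "r < sum_list ns" "r' < sum_list ns"
  shows "(\<Sum>\<kappa>\<in>KI ns ms f P Q. (1 / of_nat d) * (if inb ns (fst (fst \<kappa>)) r \<and> inb ns (fst (fst \<kappa>)) r'
      then \<rho> $$ (r,r') * (gam ns ms f (fst \<kappa>) * cnj (gam ns ms f (fst \<kappa>))) else 0)) = \<rho> $$ (r,r')"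
proof -
  let ?C = "\<lambda>i. inb ns i r \<and> inb ns i r'"
  have "(\<Sum>\<kappa>\<in>KI ns ms f P Q. (1 / of_nat d) * (if ?C (fst (fst \<kappa>))
      then \<rho> $$ (r,r') * (gam ns ms f (fst \<kappa>) * cnj (gam ns ms f (fst \<kappa>))) else 0)) =
     (\<Sum>x\<in>lab ns. \<Sum>c1<P div (ns ! fst x). \<Sum>c2<Q div (ms ! fst (f x)). (1 / of_nat d) * (if ?C (fst x)
      then \<rho> $$ (r,r') * (gam ns ms f x * cnj (gam ns ms f x)) else 0))"
    unfolding KI_sum fst_conv by (rule refl)
  also have "\<dots> = (\<Sum>x\<in>lab ns. (1 / of_nat d) * (if ?C (fst x)
      then \<rho> $$ (r,r') * (of_nat (P div ns ! fst x) * of_nat (Q div ms ! fst (f x)) * (gam ns ms f x * cnj (gam ns ms f x))) else 0))"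
  proof (rule sum.cong[OF refl])
    fix x assume "x \<in> lab ns"
    let ?t = "(1 / of_nat d) * (if ?C (fst x) then \<rho> $$ (r,r') * (gam ns ms f x * cnj (gam ns ms f x)) else (0::complex))"
    have "(\<Sum>c1<P div (ns ! fst x). \<Sum>c2<Q div (ms ! fst (f x)). ?t) = of_nat (P div (ns ! fst x)) * (of_nat (Q div (ms ! fst (f x))) * ?t)"
      by simp
    then show "(\<Sum>c1<P div (ns ! fst x). \<Sum>c2<Q div (ms ! fst (f x)). ?t) = (1 / of_nat d) * (if ?C (fst x)
      then \<rho> $$ (r,r') * (of_nat (P div ns ! fst x) * of_nat (Q div ms ! fst (f x)) * (gam ns ms f x * cnj (gam ns ms f x))) else 0)"
      by (simp add: mult_ac)
  qed
  also have "\<dots> = (\<Sum>x\<in>lab ns. (1 / of_nat d) * (if ?C (fst x)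
      then \<rho> $$ (r,r') * (of_nat d / of_nat (ns ! fst x * ns ! fst x)) else 0))"
  proof (rule sum.cong[OF refl])
    fix x assume x: "x \<in> lab ns"
    show "(1 / of_nat d) * (if ?C (fst x)
      then \<rho> $$ (r,r') * (of_nat (P div ns ! fst x) * of_nat (Q div ms ! fst (f x)) * (gam ns ms f x * cnj (gam ns ms f x))) else 0) =
      (1 / of_nat d) * (if ?C (fst x) then \<rho> $$ (r,r') * (of_nat d / of_nat (ns ! fst x * ns ! fst x)) else 0)"
      using gam_val[of x ns f ms P Q, OF x fmap[rule_format, OF x] posn posm dvn dvm] dPQ by simp
  qed
  also have "\<dots> = (\<Sum>i<length ns. \<Sum>p<ns!i. \<Sum>q<ns!i. (1 / of_nat d) * (if ?C i
      then \<rho> $$ (r,r') * (of_nat d / of_nat (ns ! i * ns ! i)) else 0))"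
    unfolding lab_sum fst_conv by (rule refl)
  also have "\<dots> = (\<Sum>i<length ns. if ?C i then \<rho> $$ (r,r') else 0)"
  proof (rule sum.cong[OF refl])
    fix i assume "i \<in> {..<length ns}"
    then have n0: "0 < ns ! i" using posn by auto
    have "(\<Sum>p<ns!i. \<Sum>q<ns!i. (1 / of_nat d) * (if ?C i then \<rho> $$ (r,r') * (of_nat d / of_nat (ns ! i * ns ! i)) else 0))
       = of_nat (ns ! i) * (of_nat (ns ! i) * ((1 / of_nat d) * (if ?C i then \<rho> $$ (r,r') * (of_nat d / of_nat (ns ! i * ns ! i)) else (0::complex))))"
      by simp
    also have "\<dots> = (if ?C i then \<rho> $$ (r,r') else 0)"
      using n0 d by (simp add: field_simps)
    finally show "(\<Sum>p<ns!i. \<Sum>q<ns!i. (1 / of_nat d) * (if ?C i then \<rho> $$ (r,r') * (of_nat d / of_nat (ns ! i * ns ! i)) else 0))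
       = (if ?C i then \<rho> $$ (r,r') else 0)" .
  qed
  also have "\<dots> = \<rho> $$ (r,r')"
  proof (cases "same_block ns r r'")
    case True
    then obtain i0 where i0: "inb ns i0 r" "inb ns i0 r'" unfolding same_block_inb by blast
    have i0l: "i0 < length ns" using i0 by (simp add: inb_def)
    have "(\<Sum>i<length ns. if ?C i then \<rho> $$ (r,r') else 0) = (\<Sum>i<length ns. if i = i0 then \<rho> $$ (r,r') else 0)"
    proof (rule sum.cong[OF refl])
      fix i assume "i \<in> {..<length ns}"
      have "?C i \<longleftrightarrow> i = i0" using i0 inb_uniq[of ns i r i0] by blast
      then show "(if ?C i then \<rho> $$ (r,r') else 0) = (if i = i0 then \<rho> $$ (r,r') else 0)" by simp
    qed
    also have "\<dots> = \<rho> $$ (r,r')" using i0l by simp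
    finally show ?thesis .
  next
    case False
    then have "\<not> ?C i" for i unfolding same_block_inb by blast
    then have "(if ?C i then \<rho> $$ (r,r') else 0) = 0" for i by meson
    moreover have "\<rho> $$ (r,r') = 0" using fdalg_zero[OF rho r False] .
    ultimately show ?thesis by simp
  qed
  finally show ?thesis .
qed


lemma core2:
  assumes posn: "\<forall>n\<in>set ns. 0 < n" and posm: "\<forall>m\<in>set ms. 0 < m"
    and dvn: "\<forall>i<length ns. ns!i dvd P" and dvm: "\<forall>j<length ms. ms!j dvd Q"
    and fmap: "\<forall>x\<in>lab ns. f x \<in> lab ms" and ginv: "\<forall>x\<in>lab ns. g (f x) = x"
    and lay: "bij_betw (\<lambda>h. (l1 h, l2 h)) {..<d} ({..<P} \<times> {..<Q})" and d: "0 < d"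
    and \<kappa>: "\<kappa> \<in> KI ns ms f P Q" and \<kappa>': "\<kappa>' \<in> KI ms ns g Q P"
  shows "(\<Sum>h<d. \<Sum>u<sum_list ms. KC ms ns g d Q P l2 l1 \<kappa>' r (u*d+h) * KC ns ms f d P Q l1 l2 \<kappa> u (r0*d+h))
    = (if \<kappa>' = (f (fst \<kappa>), snd (snd \<kappa>), fst (snd \<kappa>)) \<and> inb ns (fst (fst \<kappa>)) r \<and> r = r0 then gam ns ms f (fst \<kappa>) else 0)"
proof -
  obtain x c1 c2 where k: "\<kappa> = (x,c1,c2)" by (cases \<kappa>) auto
  obtain y e1 e2 where k': "\<kappa>' = (y,e1,e2)" by (cases \<kappa>') auto
  have "(\<Sum>h<d. \<Sum>u<sum_list ms. KC ms ns g d Q P l2 l1 \<kappa>' r (u*d+h) * KC ns ms f d P Q l1 l2 \<kappa> u (r0*d+h)) =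
     (\<Sum>u<sum_list ms. \<Sum>h<d. KC ms ns g d Q P l2 l1 \<kappa>' r (u*d+h) * KC ns ms f d P Q l1 l2 \<kappa> u (r0*d+h))"
    by (rule sum.swap)
  also have "\<dots> = (if y = f x \<and> e1 = c2 \<and> e2 = c1 \<and> inb ns (fst x) r \<and> r = r0 then gam ns ms f x else 0)"
    unfolding k k' by (rule core[OF posn posm dvn dvm fmap ginv lay d \<kappa>[unfolded k] \<kappa>'[unfolded k']])
  finally show ?thesis using k k' by auto
qed

lemma compose:
  assumes posn: "\<forall>n\<in>set ns. 0 < n" and posm: "\<forall>m\<in>set ms. 0 < m"
    and dvn: "\<forall>i<length ns. ns!i dvd P" and dvm: "\<forall>j<length ms. ms!j dvd Q"
    and fmap: "\<forall>x\<in>lab ns. f x \<in> lab ms" and ginv: "\<forall>x\<in>lab ns. g (f x) = x"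
    and lay: "bij_betw (\<lambda>h. (l1 h, l2 h)) {..<d} ({..<P} \<times> {..<Q})" and d: "0 < d" and dPQ: "d = P*Q"
    and rho: "\<rho> \<in> fdalg ns"
  shows "chanK ms ns g d Q P l2 l1 (tensor_id (chanK ns ms f d P Q l1 l2) (sum_list ns * d) (sum_list ms) d (kron \<rho> (maxent d))) = \<rho>"
proof -
  let ?A = "sum_list ns" and ?B = "sum_list ms"
  let ?K = "KC ns ms f d P Q l1 l2" and ?K' = "KC ms ns g d Q P l2 l1"
  let ?I = "KI ns ms f P Q" and ?I' = "KI ms ns g Q P"
  let ?X = "kron \<rho> (maxent d)"
  let ?T = "tensor_id (chanK ns ms f d P Q l1 l2) (?A * d) ?B d ?X"
  have rc: "\<rho> \<in> carrier_mat ?A ?A" using rho fdalg_carrier by blast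
  define L where "L \<kappa>' \<kappa> s \<sigma> = (\<Sum>u<?B. ?K' \<kappa>' s (u*d + \<sigma> mod d) * ?K \<kappa> u (\<sigma> div d))" for \<kappa>' \<kappa> s \<sigma>
  define Cr where "Cr \<kappa>' \<kappa> s r1 = (\<Sum>h<d. L \<kappa>' \<kappa> s ((r1*d+h)*d+h))" for \<kappa>' \<kappa> s r1
  have Tentry: "?T $$ (w,w') = (\<Sum>\<kappa>\<in>?I. \<Sum>\<sigma><?A*d*d. \<Sum>\<tau><?A*d*d. ktil d ?K \<kappa> w \<sigma> * ?X $$ (\<sigma>,\<tau>) * cnj (ktil d ?K \<kappa> w' \<tau>))"
    if "w < ?B*d" "w' < ?B*d" for w w'
    unfolding chanK_def by (rule tensor_kmap_entry[OF that])
  have Cr_val: "Cr \<kappa>' \<kappa> s r1 = (if \<kappa>' = (f (fst \<kappa>), snd (snd \<kappa>), fst (snd \<kappa>)) \<and> inb ns (fst (fst \<kappa>)) s \<and> s = r1 then gam ns ms f (fst \<kappa>) else 0)"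
    if "\<kappa> \<in> ?I" "\<kappa>' \<in> ?I'" for \<kappa> \<kappa>' s r1
  proof -
    have "Cr \<kappa>' \<kappa> s r1 = (\<Sum>h<d. \<Sum>u<?B. ?K' \<kappa>' s (u*d+h) * ?K \<kappa> u (r1*d+h))"
      unfolding Cr_def L_def by (intro sum.cong refl) simp
    also have "\<dots> = (if \<kappa>' = (f (fst \<kappa>), snd (snd \<kappa>), fst (snd \<kappa>)) \<and> inb ns (fst (fst \<kappa>)) s \<and> s = r1 then gam ns ms f (fst \<kappa>) else 0)"
      by (rule core2[OF posn posm dvn dvm fmap ginv lay d that])
    finally show ?thesis .
  qed
  show ?thesis
  proof (rule eq_matI)
    show "dim_row (chanK ms ns g d Q P l2 l1 ?T) = dim_row \<rho>" using rc by (simp add: chanK_def kmap_def)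
    show "dim_col (chanK ms ns g d Q P l2 l1 ?T) = dim_col \<rho>" using rc by (simp add: chanK_def kmap_def)
    fix r r' assume "r < dim_row \<rho>" "r' < dim_col \<rho>"
    then have r: "r < ?A" "r' < ?A" using rc by auto
    have "chanK ms ns g d Q P l2 l1 ?T $$ (r,r') =
       (\<Sum>\<kappa>'\<in>?I'. \<Sum>w<?B*d. \<Sum>w'<?B*d. ?K' \<kappa>' r w * ?T $$ (w,w') * cnj (?K' \<kappa>' r' w'))"
      using r by (simp add: chanK_def kmap_def)
    also have "\<dots> = (\<Sum>\<kappa>'\<in>?I'. \<Sum>w<?B*d. \<Sum>w'<?B*d. ?K' \<kappa>' r w *
        (\<Sum>\<kappa>\<in>?I. \<Sum>\<sigma><?A*d*d. \<Sum>\<tau><?A*d*d. ktil d ?K \<kappa> w \<sigma> * ?X $$ (\<sigma>,\<tau>) * cnj (ktil d ?K \<kappa> w' \<tau>)) * cnj (?K' \<kappa>' r' w'))"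
      by (intro sum.cong refl) (simp add: Tentry)
    also have "\<dots> = (\<Sum>\<kappa>'\<in>?I'. \<Sum>\<kappa>\<in>?I. \<Sum>\<sigma><?A*d*d. \<Sum>\<tau><?A*d*d.
        (\<Sum>w<?B*d. ?K' \<kappa>' r w * ktil d ?K \<kappa> w \<sigma>) * ?X $$ (\<sigma>,\<tau>) * (\<Sum>w'<?B*d. cnj (ktil d ?K \<kappa> w' \<tau>) * cnj (?K' \<kappa>' r' w')))"
      by (rule sum.cong[OF refl], rule sesq_abstract)
    also have "\<dots> = (\<Sum>\<kappa>'\<in>?I'. \<Sum>\<kappa>\<in>?I. \<Sum>\<sigma><?A*d*d. \<Sum>\<tau><?A*d*d.
        L \<kappa>' \<kappa> r \<sigma> * ?X $$ (\<sigma>,\<tau>) * cnj (L \<kappa>' \<kappa> r' \<tau>))"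
    proof (intro sum.cong refl)
      fix \<kappa>' \<kappa> \<sigma> \<tau>
      have e1: "(\<Sum>w<?B*d. ?K' \<kappa>' r w * ktil d ?K \<kappa> w \<sigma>) = L \<kappa>' \<kappa> r \<sigma>"
        unfolding L_def by (rule L_formula[OF d])
      have "(\<Sum>w'<?B*d. cnj (ktil d ?K \<kappa> w' \<tau>) * cnj (?K' \<kappa>' r' w')) = cnj (\<Sum>w'<?B*d. ?K' \<kappa>' r' w' * ktil d ?K \<kappa> w' \<tau>)"
        by (simp add: mult.commute)
      also have "\<dots> = cnj (L \<kappa>' \<kappa> r' \<tau>)"
        unfolding L_def by (subst L_formula[OF d]) (rule refl)
      finally show "(\<Sum>w<?B*d. ?K' \<kappa>' r w * ktil d ?K \<kappa> w \<sigma>) * ?X $$ (\<sigma>,\<tau>) * (\<Sum>w'<?B*d. cnj (ktil d ?K \<kappa> w' \<tau>) * cnj (?K' \<kappa>' r' w'))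
          = L \<kappa>' \<kappa> r \<sigma> * ?X $$ (\<sigma>,\<tau>) * cnj (L \<kappa>' \<kappa> r' \<tau>)" using e1 by simp
    qed
    also have "\<dots> = (\<Sum>\<kappa>'\<in>?I'. \<Sum>\<kappa>\<in>?I. (1 / of_nat d) * (\<Sum>r1<?A. \<Sum>r1'<?A. \<rho> $$ (r1,r1') * Cr \<kappa>' \<kappa> r r1 * cnj (Cr \<kappa>' \<kappa> r' r1')))"
    proof (intro sum.cong refl)
      fix \<kappa>' \<kappa>
      show "(\<Sum>\<sigma><?A*d*d. \<Sum>\<tau><?A*d*d. L \<kappa>' \<kappa> r \<sigma> * ?X $$ (\<sigma>,\<tau>) * cnj (L \<kappa>' \<kappa> r' \<tau>)) =
         (1 / of_nat d) * (\<Sum>r1<?A. \<Sum>r1'<?A. \<rho> $$ (r1,r1') * Cr \<kappa>' \<kappa> r r1 * cnj (Cr \<kappa>' \<kappa> r' r1'))"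
        unfolding kron_sum[OF d rc, of "L \<kappa>' \<kappa> r" "\<lambda>\<tau>. cnj (L \<kappa>' \<kappa> r' \<tau>)"] Cr_def cnj_sum by (rule refl)
    qed
    also have "\<dots> = (\<Sum>\<kappa>'\<in>?I'. \<Sum>\<kappa>\<in>?I. (1 / of_nat d) *
        (if \<kappa>' = (f (fst \<kappa>), snd (snd \<kappa>), fst (snd \<kappa>)) \<and> inb ns (fst (fst \<kappa>)) r \<and> inb ns (fst (fst \<kappa>)) r'
         then \<rho> $$ (r,r') * gam ns ms f (fst \<kappa>) * cnj (gam ns ms f (fst \<kappa>)) else 0))"
    proof (rule sum.cong[OF refl], rule sum.cong[OF refl])
      fix \<kappa>' \<kappa> assume k': "\<kappa>' \<in> ?I'" and k: "\<kappa> \<in> ?I"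
      show "(1 / of_nat d) * (\<Sum>r1<?A. \<Sum>r1'<?A. \<rho> $$ (r1,r1') * Cr \<kappa>' \<kappa> r r1 * cnj (Cr \<kappa>' \<kappa> r' r1')) =
        (1 / of_nat d) * (if \<kappa>' = (f (fst \<kappa>), snd (snd \<kappa>), fst (snd \<kappa>)) \<and> inb ns (fst (fst \<kappa>)) r \<and> inb ns (fst (fst \<kappa>)) r'
         then \<rho> $$ (r,r') * gam ns ms f (fst \<kappa>) * cnj (gam ns ms f (fst \<kappa>)) else 0)"
        unfolding Cr_val[OF k k'] rho_collapse[OF r] by (rule refl)
    qed
    also have "\<dots> = (\<Sum>\<kappa>\<in>?I. \<Sum>\<kappa>'\<in>?I'. (1 / of_nat d) *
        (if \<kappa>' = (f (fst \<kappa>), snd (snd \<kappa>), fst (snd \<kappa>)) \<and> inb ns (fst (fst \<kappa>)) r \<and> inb ns (fst (fst \<kappa>)) r'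
         then \<rho> $$ (r,r') * gam ns ms f (fst \<kappa>) * cnj (gam ns ms f (fst \<kappa>)) else 0))"
      by (rule sum.swap)
    also have "\<dots> = (\<Sum>\<kappa>\<in>?I. (1 / of_nat d) * (if inb ns (fst (fst \<kappa>)) r \<and> inb ns (fst (fst \<kappa>)) r'
      then \<rho> $$ (r,r') * (gam ns ms f (fst \<kappa>) * cnj (gam ns ms f (fst \<kappa>))) else 0))"
    proof (rule sum.cong[OF refl])
      fix \<kappa> assume k: "\<kappa> \<in> ?I"
      obtain x c1 c2 where kx: "\<kappa> = (x,c1,c2)" by (cases \<kappa>) auto
      have x: "x \<in> lab ns" and c1: "c1 < P div (ns ! fst x)" and c2: "c2 < Q div (ms ! fst (f x))"
        using k kx by (auto simp: KI_iff)
      have mem: "(f x, c2, c1) \<in> ?I'"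
        using fmap x c1 c2 ginv by (auto simp: KI_iff)
      let ?V = "(1 / of_nat d) * (if inb ns (fst x) r \<and> inb ns (fst x) r'
         then \<rho> $$ (r,r') * gam ns ms f x * cnj (gam ns ms f x) else 0)"
      have "(\<Sum>\<kappa>'\<in>?I'. (1 / of_nat d) *
        (if \<kappa>' = (f x, c2, c1) \<and> inb ns (fst x) r \<and> inb ns (fst x) r'
         then \<rho> $$ (r,r') * gam ns ms f x * cnj (gam ns ms f x) else 0)) = (\<Sum>\<kappa>'\<in>?I'. if \<kappa>' = (f x, c2, c1) then ?V else 0)"
        by (intro sum.cong refl) auto
      also have "\<dots> = ?V" using mem finite_KI by (simp add: sum.delta)
      also have "\<dots> = (1 / of_nat d) * (if inb ns (fst x) r \<and> inb ns (fst x) r'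
         then \<rho> $$ (r,r') * (gam ns ms f x * cnj (gam ns ms f x)) else 0)"
        by (simp only: mult.assoc)
      finally show "(\<Sum>\<kappa>'\<in>?I'. (1 / of_nat d) *
        (if \<kappa>' = (f (fst \<kappa>), snd (snd \<kappa>), fst (snd \<kappa>)) \<and> inb ns (fst (fst \<kappa>)) r \<and> inb ns (fst (fst \<kappa>)) r'
         then \<rho> $$ (r,r') * gam ns ms f (fst \<kappa>) * cnj (gam ns ms f (fst \<kappa>)) else 0)) =
        (1 / of_nat d) * (if inb ns (fst (fst \<kappa>)) r \<and> inb ns (fst (fst \<kappa>)) r'
      then \<rho> $$ (r,r') * (gam ns ms f (fst \<kappa>) * cnj (gam ns ms f (fst \<kappa>))) else 0)"
        unfolding kx fst_conv snd_conv .
    qed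
    also have "\<dots> = \<rho> $$ (r,r')"
      by (rule final_count[OF posn posm dvn dvm fmap dPQ d rho r])
    finally show "chanK ms ns g d Q P l2 l1 ?T $$ (r,r') = \<rho> $$ (r,r')" .
  qed
qed


lemma chanK_channel:
  assumes posn: "\<forall>n\<in>set ns. 0 < n" and posm: "\<forall>m\<in>set ms. 0 < m"
    and dvn: "\<forall>i<length ns. ns!i dvd P" and dvm: "\<forall>j<length ms. ms!j dvd Q"
    and fmap: "\<forall>x\<in>lab ns. f x \<in> lab ms"
    and lay: "bij_betw (\<lambda>h. (l1 h, l2 h)) {..<d} ({..<P} \<times> {..<Q})" and d: "0 < d"
  shows "channel (ampl ns d) ms (chanK ns ms f d P Q l1 l2)"
  unfolding channel_def
proof (intro conjI ballI allI impI)
  let ?K = "KC ns ms f d P Q l1 l2" and ?I = "KI ns ms f P Q"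
  fix X assume X: "X \<in> fdalg (ampl ns d)"
  show "chanK ns ms f d P Q l1 l2 X \<in> fdalg ms"
    unfolding chanK_def
  proof (rule kmap_fdalg)
    fix \<kappa> u v s t assume "\<kappa> \<in> ?I" "?K \<kappa> u s \<noteq> 0" "?K \<kappa> v t \<noteq> 0"
    then have "inb ms (fst (f (fst \<kappa>))) u" "inb ms (fst (f (fst \<kappa>))) v"
      unfolding KC_def Bpart_def by (auto split: if_splits)
    then show "same_block ms u v" unfolding same_block_inb by blast
  qed
  have Xc: "X \<in> carrier_mat (sum_list ns * d) (sum_list ns * d)" using X fdalg_carrier sum_ampl by metis
  show "mtrace (chanK ns ms f d P Q l1 l2 X) = mtrace X"
  proof -
    have "mtrace (chanK ns ms f d P Q l1 l2 X) = (\<Sum>s<sum_list ns * d. X $$ (s,s))"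
      unfolding chanK_def
      by (rule kmap_trace) (rule chanK_TP[OF posn posm dvn dvm fmap lay])
    also have "\<dots> = mtrace X" using Xc by (simp add: mtrace_def)
    finally show ?thesis .
  qed
  fix Y a b assume Y: "Y \<in> fdalg (ampl ns d)"
  have Yc: "Y \<in> carrier_mat (sum_list ns * d) (sum_list ns * d)" using Y fdalg_carrier sum_ampl by metis
  show "chanK ns ms f d P Q l1 l2 (a \<cdot>\<^sub>m X + b \<cdot>\<^sub>m Y) = a \<cdot>\<^sub>m chanK ns ms f d P Q l1 l2 X + b \<cdot>\<^sub>m chanK ns ms f d P Q l1 l2 Y"
    unfolding chanK_def by (rule kmap_lin[OF Xc Yc])
next
  fix k :: nat and Z assume k: "0 < k" and Z: "Z \<in> fdalg (ampl (ampl ns d) k)" and ps: "psd (sum_list (ampl ns d) * k) Z"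
  show "psd (sum_list ms * k) (tensor_id (chanK ns ms f d P Q l1 l2) (sum_list (ampl ns d)) (sum_list ms) k Z)"
    unfolding chanK_def sum_ampl
    by (rule kmap_cp[OF finite_KI k]) (use ps in \<open>simp add: sum_ampl\<close>)
qed

lemma lay_div_mod:
  assumes Q: "0 < (Q::nat)"
  shows "bij_betw (\<lambda>h. (h div Q, h mod Q)) {..<P*Q} ({..<P} \<times> {..<Q})"
proof (rule bij_betw_byWitness[where f'="\<lambda>(a,b). a*Q+b"])
  show "\<forall>a\<in>{..<P * Q}. (\<lambda>(a, b). a * Q + b) (a div Q, a mod Q) = a" by simp
  show "\<forall>a'\<in>{..<P} \<times> {..<Q}. (\<lambda>h. (h div Q, h mod Q)) ((\<lambda>(a, b). a * Q + b) a') = a'" by auto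
  show "(\<lambda>h. (h div Q, h mod Q)) ` {..<P * Q} \<subseteq> {..<P} \<times> {..<Q}"
    using Q by (auto simp: div_less_iff_less_mult)
  show "(\<lambda>(a, b). a * Q + b) ` ({..<P} \<times> {..<Q}) \<subseteq> {..<P * Q}"
  proof clarsimp
    fix a b assume "a < P" "b < Q"
    then have "a*Q + b < a*Q + Q" by simp
    also have "\<dots> = Suc a * Q" by simp
    also have "\<dots> \<le> P * Q" using \<open>a < P\<close> by (intro mult_right_mono) auto
    finally show "a*Q+b < P*Q" .
  qed
qed

lemma lay_mod_div:
  assumes Q: "0 < (Q::nat)"
  shows "bij_betw (\<lambda>h. (h mod Q, h div Q)) {..<P*Q} ({..<Q} \<times> {..<P})"
proof -
  have "bij_betw ((\<lambda>(a,b). (b,a)) \<circ> (\<lambda>h. (h div Q, h mod Q))) {..<P*Q} ({..<Q} \<times> {..<P})"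
  proof (rule bij_betw_trans[OF lay_div_mod[OF Q]])
    show "bij_betw (\<lambda>(a, b). (b, a)) ({..<P} \<times> {..<Q}) ({..<Q} \<times> {..<P})"
      by (rule bij_betw_byWitness[where f'="\<lambda>(a,b). (b,a)"]) auto
  qed
  then show ?thesis by (simp add: comp_def)
qed

lemma prod_list_pos: "\<forall>n\<in>set ns. 0 < n \<Longrightarrow> 0 < prod_list (ns::nat list)"
  by (induction ns) auto

lemma card_lab: "card (lab ns) = card (sidx ns)"
proof -
  let ?\<phi> = "\<lambda>(i,p,q). (blk_off ns i + p, blk_off ns i + q)"
  have "bij_betw ?\<phi> (lab ns) (sidx ns)"
  proof (rule bij_betw_byWitness[where f'="\<lambda>(r,c). (blk ns r, r - blk_off ns (blk ns r), c - blk_off ns (blk ns r))"])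
    show "\<forall>a\<in>lab ns. (\<lambda>(r,c). (blk ns r, r - blk_off ns (blk ns r), c - blk_off ns (blk ns r))) (?\<phi> a) = a"
    proof
      fix a assume a: "a \<in> lab ns"
      obtain i p q where aa: "a = (i,p,q)" by (cases a) auto
      have "inb ns i (blk_off ns i + p)" using a aa by (auto simp: lab_iff inb_def)
      then have "blk ns (blk_off ns i + p) = i" by (rule inb_blk_eq)
      then show "(\<lambda>(r,c). (blk ns r, r - blk_off ns (blk ns r), c - blk_off ns (blk ns r))) (?\<phi> a) = a"
        using aa by simp
    qed
    show "\<forall>a'\<in>sidx ns. ?\<phi> ((\<lambda>(r,c). (blk ns r, r - blk_off ns (blk ns r), c - blk_off ns (blk ns r))) a') = a'"
    proof
      fix a' assume a': "a' \<in> sidx ns"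
      obtain r c where rc: "a' = (r,c)" by (cases a') auto
      obtain i where i: "inb ns i r" "inb ns i c" using a' rc unfolding sidx_def same_block_inb by blast
      have "blk ns r = i" by (rule inb_blk_eq[OF i(1)])
      then show "?\<phi> ((\<lambda>(r,c). (blk ns r, r - blk_off ns (blk ns r), c - blk_off ns (blk ns r))) a') = a'"
        using i rc by (auto simp: inb_def)
    qed
    show "?\<phi> ` lab ns \<subseteq> sidx ns"
    proof clarify
      fix i p q assume "(i,p,q) \<in> lab ns"
      then have "inb ns i (blk_off ns i + p)" "inb ns i (blk_off ns i + q)" by (auto simp: lab_iff inb_def)
      then show "(blk_off ns i + p, blk_off ns i + q) \<in> sidx ns"
        unfolding sidx_def same_block_inb using inb_lt by blast
    qed
    show "(\<lambda>(r,c). (blk ns r, r - blk_off ns (blk ns r), c - blk_off ns (blk ns r))) ` sidx ns \<subseteq> lab ns"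
    proof clarify
      fix r c assume rc: "(r,c) \<in> sidx ns"
      obtain i where i: "inb ns i r" "inb ns i c" using rc unfolding sidx_def same_block_inb by blast
      have "blk ns r = i" by (rule inb_blk_eq[OF i(1)])
      then show "(blk ns r, r - blk_off ns (blk ns r), c - blk_off ns (blk ns r)) \<in> lab ns"
        using i by (auto simp: lab_iff inb_def)
    qed
  qed
  then show ?thesis by (rule bij_betw_same_card)
qed

theorem mainTheorem2:
  fixes ns ms :: "nat list"
  assumes "\<forall>n \<in> set ns. 0 < n" and "\<forall>m \<in> set ms. 0 < m"
  shows "(\<exists>d > 0. \<exists>M. ent_invertible ns ms d (maxent d) M) \<longleftrightarrow> alg_dim ns = alg_dim ms"
proof
  assume "\<exists>d > 0. \<exists>M. ent_invertible ns ms d (maxent d) M"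
  then obtain d M where "0 < d" "ent_invertible ns ms d (maxent d) M" by blast
  then have "card (sidx ns) = card (sidx ms)" by (rule forward)
  then show "alg_dim ns = alg_dim ms" by (simp add: alg_dim_card)
next
  assume "alg_dim ns = alg_dim ms"
  then have "card (lab ns) = card (lab ms)" by (simp add: alg_dim_card card_lab)
  then obtain f where f: "bij_betw f (lab ns) (lab ms)"
    using finite_same_card_bij[OF finite_lab finite_lab] by blast
  define g where "g = inv_into (lab ns) f"
  have g: "bij_betw g (lab ms) (lab ns)" unfolding g_def by (rule bij_betw_inv_into[OF f])
  have fmap: "\<forall>x\<in>lab ns. f x \<in> lab ms" using f bij_betwE by blast
  have gmap: "\<forall>y\<in>lab ms. g y \<in> lab ns" using g bij_betwE by blast
  have ginv: "\<forall>x\<in>lab ns. g (f x) = x" unfolding g_def using f bij_betw_inv_into_left by fastforce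
  have finv: "\<forall>y\<in>lab ms. f (g y) = y" unfolding g_def using f bij_betw_inv_into_right by fastforce
  define P where "P = prod_list ns"
  define Q where "Q = prod_list ms"
  define d where "d = P * Q"
  have P0: "0 < P" unfolding P_def using assms(1) by (rule prod_list_pos)
  have Q0: "0 < Q" unfolding Q_def using assms(2) by (rule prod_list_pos)
  have d0: "0 < d" unfolding d_def using P0 Q0 by simp
  have dvn: "\<forall>i<length ns. ns!i dvd P" unfolding P_def by (auto intro: prod_list_dvd)
  have dvm: "\<forall>j<length ms. ms!j dvd Q" unfolding Q_def by (auto intro: prod_list_dvd)
  have lay1: "bij_betw (\<lambda>h. (h div Q, h mod Q)) {..<d} ({..<P} \<times> {..<Q})"
    unfolding d_def by (rule lay_div_mod[OF Q0])
  have lay2: "bij_betw (\<lambda>h. (h mod Q, h div Q)) {..<d} ({..<Q} \<times> {..<P})"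
    unfolding d_def by (rule lay_mod_div[OF Q0])
  define M where "M = chanK ns ms f d P Q (\<lambda>h. h div Q) (\<lambda>h. h mod Q)"
  define N where "N = chanK ms ns g d Q P (\<lambda>h. h mod Q) (\<lambda>h. h div Q)"
  have chM: "channel (ampl ns d) ms M"
    unfolding M_def by (rule chanK_channel[OF assms dvn dvm fmap lay1 d0])
  have chN: "channel (ampl ms d) ns N"
    unfolding N_def by (rule chanK_channel[OF assms(2,1) dvm dvn gmap lay2 d0])
  have c1: "\<forall>\<rho> \<in> fdalg ns. N (tensor_id M (sum_list ns * d) (sum_list ms) d (kron \<rho> (maxent d))) = \<rho>"
    unfolding M_def N_def
    using compose[OF assms dvn dvm fmap ginv lay1 d0 d_def] by blast
  have c2: "\<forall>\<sigma> \<in> fdalg ms. M (tensor_id N (sum_list ms * d) (sum_list ns) d (kron \<sigma> (swap_state d d (maxent d)))) = \<sigma>"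
    unfolding M_def N_def swap_maxent
    using compose[OF assms(2,1) dvm dvn gmap finv lay2 d0, of \<sigma> for \<sigma>] d_def by (simp add: mult.commute)
  have "ent_invertible ns ms d (maxent d) M"
    unfolding ent_invertible_def using chM chN c1 c2 by blast
  then show "\<exists>d > 0. \<exists>M. ent_invertible ns ms d (maxent d) M" using d0 by blast
qed


end
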